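(* Let $U$ be an open subset of a complex locally convex space $E$, let $F$ be a sequentially complete complex locally convex space, and let $\Lambda$ be a set of continuous complex linear functionals on $F$ which separates the points of $F$ (for each $x\ne0$ in $F$ there is $\lambda\in\Lambda$ with $\lambda(x)\ne0$). If $f\colon U\to F$ is continuous and $\lambda\circ f\colon U\to\mathbb C$ is complex analytic for every $\lambda\in\Lambda$, then $f$ is complex analytic.
   Context: A map $f\colon U\to F$ between locally convex spaces is complex analytic if it is continuous and locally given by a pointwise convergent series of continuous homogeneous polynomials; equivalently it is $C^\infty_{\mathbb C}$ in the sense of Bastiani/Keller, i.e. all iterated complex directional derivatives $d^{(k)}f(x,y_1,\dots,y_k)$ exist and define continuous maps $U\times E^k\to F$. *)

theory Defs
  imports "HOL-Analysis.Analysis"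
begin

definition cvs :: "(complex \<Rightarrow> 'a::ab_group_add \<Rightarrow> 'a) \<Rightarrow> bool" where
  "cvs sm \<longleftrightarrow>
     (\<forall>a x y. sm a (x + y) = sm a x + sm a y) \<and>
     (\<forall>a b x. sm (a + b) x = sm a x + sm b x) \<and>
     (\<forall>a b x. sm (a * b) x = sm a (sm b x)) \<and>
     (\<forall>x. sm 1 x = x)"

definition cseminorm :: "(complex \<Rightarrow> 'a::ab_group_add \<Rightarrow> 'a) \<Rightarrow> ('a \<Rightarrow> real) \<Rightarrow> bool" where
  "cseminorm sm p \<longleftrightarrow>
     (\<forall>x y. p (x + y) \<le> p x + p y) \<and> (\<forall>c x. p (sm c x) = norm c * p x)"

text \<open>The locally convex topology defined by a family of seminorms (subbasis: open
  semiballs; UNIV is added so that the carrier is UNIV even for the empty family).\<close>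
definition seminorm_topology :: "('a::ab_group_add \<Rightarrow> real) set \<Rightarrow> 'a topology" where
  "seminorm_topology P =
     topology_generated_by (insert UNIV {{y. p (y - x) < r} | p x r. p \<in> P \<and> r > 0})"

definition clcs :: "(complex \<Rightarrow> 'a::ab_group_add \<Rightarrow> 'a) \<Rightarrow> ('a \<Rightarrow> real) set \<Rightarrow> bool" where
  "clcs sm P \<longleftrightarrow> cvs sm \<and> (\<forall>p\<in>P. cseminorm sm p) \<and> (\<forall>x. x \<noteq> 0 \<longrightarrow> (\<exists>p\<in>P. p x \<noteq> 0))"

definition seminorm_Cauchy :: "('a::ab_group_add \<Rightarrow> real) set \<Rightarrow> (nat \<Rightarrow> 'a) \<Rightarrow> bool" where
  "seminorm_Cauchy P X \<longleftrightarrow>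
     (\<forall>p\<in>P. \<forall>e>0. \<exists>N. \<forall>m\<ge>N. \<forall>n\<ge>N. p (X m - X n) < e)"

definition seq_complete_lcs :: "('a::ab_group_add \<Rightarrow> real) set \<Rightarrow> bool" where
  "seq_complete_lcs P \<longleftrightarrow>
     (\<forall>X. seminorm_Cauchy P X \<longrightarrow> (\<exists>l. limitin (seminorm_topology P) X l sequentially))"

definition clinear_map ::
  "(complex \<Rightarrow> 'a::ab_group_add \<Rightarrow> 'a) \<Rightarrow> (complex \<Rightarrow> 'b::ab_group_add \<Rightarrow> 'b) \<Rightarrow> ('a \<Rightarrow> 'b) \<Rightarrow> bool" where
  "clinear_map smE smF T \<longleftrightarrow>
     (\<forall>x y. T (x + y) = T x + T y) \<and> (\<forall>c x. T (smE c x) = smF c (T x))"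

text \<open>Complex n-linear maps \<open>E\<^sup>n \<rightarrow> F\<close>; the arguments are indexed by \<open>{..<n}\<close>.\<close>
definition cmultilinear ::
  "(complex \<Rightarrow> 'a::ab_group_add \<Rightarrow> 'a) \<Rightarrow> (complex \<Rightarrow> 'b::ab_group_add \<Rightarrow> 'b) \<Rightarrow> nat
     \<Rightarrow> ((nat \<Rightarrow> 'a) \<Rightarrow> 'b) \<Rightarrow> bool" where
  "cmultilinear smE smF n A \<longleftrightarrow>
     (\<forall>v w. (\<forall>i<n. v i = w i) \<longrightarrow> A v = A w) \<and>
     (\<forall>i<n. \<forall>v. clinear_map smE smF (\<lambda>y. A (v(i := y))))"

definition chom_poly ::
  "(complex \<Rightarrow> 'a::ab_group_add \<Rightarrow> 'a) \<Rightarrow> (complex \<Rightarrow> 'b::ab_group_add \<Rightarrow> 'b) \<Rightarrow> nat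
     \<Rightarrow> ('a \<Rightarrow> 'b) \<Rightarrow> bool" where
  "chom_poly smE smF n p \<longleftrightarrow> (\<exists>A. cmultilinear smE smF n A \<and> (\<forall>y. p y = A (\<lambda>_. y)))"

definition canalytic ::
  "(complex \<Rightarrow> 'a::ab_group_add \<Rightarrow> 'a) \<Rightarrow> ('a \<Rightarrow> real) set \<Rightarrow>
   (complex \<Rightarrow> 'b::ab_group_add \<Rightarrow> 'b) \<Rightarrow> ('b \<Rightarrow> real) set \<Rightarrow> 'a set \<Rightarrow> ('a \<Rightarrow> 'b) \<Rightarrow> bool" where
  "canalytic smE PE smF PF U f \<longleftrightarrow>
     continuous_map (subtopology (seminorm_topology PE) U) (seminorm_topology PF) f \<and>
     (\<forall>x\<in>U. \<exists>V pn. openin (seminorm_topology PE) V \<and> x \<in> V \<and> V \<subseteq> U \<and>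
        (\<forall>n. chom_poly smE smF n (pn n) \<and>
             continuous_map (seminorm_topology PE) (seminorm_topology PF) (pn n)) \<and>
        (\<forall>y\<in>V. limitin (seminorm_topology PF) (\<lambda>N. \<Sum>n<N. pn n (y - x)) (f y) sequentially))"

abbreviation complex_seminorms :: "(complex \<Rightarrow> real) set" where
  "complex_seminorms \<equiv> {norm}"

end

theory Submission
  imports Defs "HOL-Complex_Analysis.Complex_Analysis" "HOL-Library.Real_Mod"
begin


section \<open>Algebra\<close>

locale cvsl = fixes sm :: "complex \<Rightarrow> 'a::ab_group_add \<Rightarrow> 'a" assumes cvs: "cvs sm"
begin
lemma add: "sm a (x + y) = sm a x + sm a y" using cvs by (simp add: cvs_def)
lemma addc: "sm (a + b) x = sm a x + sm b x" using cvs by (simp add: cvs_def)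
lemma mult: "sm (a * b) x = sm a (sm b x)" using cvs by (simp add: cvs_def)
lemma one[simp]: "sm 1 x = x" using cvs by (simp add: cvs_def)
lemma zero_right[simp]: "sm a 0 = 0"
  using add[of a 0 0] by simp
lemma zero_left[simp]: "sm 0 x = 0"
  using addc[of 0 0 x] by simp
lemma minus_right: "sm a (- x) = - sm a x"
proof -
  have "sm a x + sm a (- x) = 0" using add[of a x "-x"] by simp
  then show ?thesis by (simp add: eq_neg_iff_add_eq_0 add.commute)
qed
lemma diff_right: "sm a (x - y) = sm a x - sm a y"
  using add[of a x "-y"] minus_right by simp
lemma minus_left: "sm (- a) x = - sm a x"
proof -
  have "sm a x + sm (- a) x = 0" using addc[of a "-a" x] by simp
  then show ?thesis by (simp add: eq_neg_iff_add_eq_0 add.commute)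
qed
lemma diff_left: "sm (a - b) x = sm a x - sm b x"
  using addc[of a "-b" x] minus_left by simp
lemma neg1: "sm (-1) x = - x" using minus_left[of 1 x] by simp
lemma sum_right: "sm a (\<Sum>i\<in>S. g i) = (\<Sum>i\<in>S. sm a (g i))"
  by (induction S rule: infinite_finite_induct) (auto simp: add)
lemma sum_left: "sm (\<Sum>i\<in>S. g i) x = (\<Sum>i\<in>S. sm (g i) x)"
  by (induction S rule: infinite_finite_induct) (auto simp: addc)
lemma of_nat_left: "sm (of_nat k) x = (\<Sum>i<k. x)"
  by (induction k) (auto simp: addc)
end

locale snorm = cvsl sm for sm :: "complex \<Rightarrow> 'a::ab_group_add \<Rightarrow> 'a" +
  fixes p :: "'a \<Rightarrow> real"
  assumes triangle: "p (x + y) \<le> p x + p y" and homog: "p (sm c x) = norm c * p x"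
begin
lemma zero[simp]: "p 0 = 0" using homog[of 0 0] by simp
lemma minus: "p (- x) = p x" using homog[of "-1" x] neg1 by simp
lemma commute: "p (x - y) = p (y - x)" using minus[of "x - y"] by simp
lemma nonneg: "p x \<ge> 0" using triangle[of x "-x"] minus[of x] by simp
lemma triangle_diff: "p (x - z) \<le> p (x - y) + p (y - z)"
  using triangle[of "x - y" "y - z"] by simp
lemma rev_tri: "\<bar>p x - p y\<bar> \<le> p (x - y)"
  using triangle[of "x - y" y] triangle[of "y - x" x] commute[of x y] by auto
lemma sum: "p (\<Sum>i\<in>S. g i) \<le> (\<Sum>i\<in>S. p (g i))"
  by (induction S rule: infinite_finite_induct) (auto intro: order_trans[OF triangle])
lemma scale_diff: "p (sm c u - sm c' u') \<le> norm c * p (u - u') + norm (c - c') * p u'"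
proof -
  have "sm c u - sm c' u' = sm c (u - u') + sm (c - c') u'"
    by (simp add: diff_right diff_left)
  then show ?thesis using triangle[of "sm c (u - u')" "sm (c - c') u'"] by (simp add: homog)
qed
end

lemma clcs_cvs: "clcs sm P \<Longrightarrow> cvsl sm" by (simp add: clcs_def cvsl_def)
lemma clcs_snorm: "clcs sm P \<Longrightarrow> p \<in> P \<Longrightarrow> snorm sm p"
  by (auto simp: clcs_def snorm_def snorm_axioms_def cvsl_def cseminorm_def)

section \<open>Topology\<close>

definition sball :: "('a::ab_group_add \<Rightarrow> real) set \<Rightarrow> 'a \<Rightarrow> real \<Rightarrow> 'a set" where
  "sball Q x r = {y. \<forall>p\<in>Q. p (y - x) < r}"

lemma topspace_st[simp]: "topspace (seminorm_topology P) = UNIV"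
  unfolding seminorm_topology_def by (simp add: topology_generated_by_topspace) 

lemma openin_semiball: "openin (seminorm_topology P) {y. p (y - x) < r}" if "p \<in> P" "r > 0"
  unfolding seminorm_topology_def using that
  by (intro topology_generated_by_Basis) blast

locale lcs = fixes sm :: "complex \<Rightarrow> 'a::ab_group_add \<Rightarrow> 'a" and P
  assumes clcs: "clcs sm P"
begin

lemma sn: "p \<in> P \<Longrightarrow> snorm sm p" using clcs_snorm[OF clcs] .
lemma cv: "cvsl sm" using clcs_cvs[OF clcs] .

lemma openin_sball: "finite Q \<Longrightarrow> Q \<subseteq> P \<Longrightarrow> r > 0 \<Longrightarrow> openin (seminorm_topology P) (sball Q x r)"
proof (induction Q rule: finite_induct)
  case empty then show ?case using openin_topspace[of "seminorm_topology P"] by (simp add: sball_def)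
next
  case (insert p Q)
  have "sball (insert p Q) x r = {y. p (y - x) < r} \<inter> sball Q x r" by (auto simp: sball_def)
  then show ?case using insert openin_semiball[of p P r x] by auto
qed

lemma center_sball: "r > 0 \<Longrightarrow> Q \<subseteq> P \<Longrightarrow> x \<in> sball Q x r"
proof -
  assume "r > 0" "Q \<subseteq> P"
  have "p (x - x) < r" if "p \<in> Q" for p
    using snorm.zero[OF sn[of p]] that \<open>r > 0\<close> \<open>Q \<subseteq> P\<close> by auto
  then show ?thesis by (simp add: sball_def)
qed

lemma openin_char:
  "openin (seminorm_topology P) S \<longleftrightarrow>
    (\<forall>x\<in>S. \<exists>Q r. finite Q \<and> Q \<subseteq> P \<and> r > 0 \<and> sball Q x r \<subseteq> S)"
proof
  assume "openin (seminorm_topology P) S"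
  then have "generate_topology_on (insert UNIV {{y. p (y - x) < r} | p x r. p \<in> P \<and> r > 0}) S"
    unfolding seminorm_topology_def by (rule openin_topology_generated_by)
  then show "\<forall>x\<in>S. \<exists>Q r. finite Q \<and> Q \<subseteq> P \<and> r > 0 \<and> sball Q x r \<subseteq> S"
  proof induction
    case Empty then show ?case by simp
  next
    case (Int a b)
    show ?case
    proof
      fix x assume "x \<in> a \<inter> b"
      then have xab: "x \<in> a" "x \<in> b" by auto
      from Int.IH(1)[rule_format, OF xab(1)] obtain Q1 r1 where Q1: "finite Q1" "Q1 \<subseteq> P" "r1 > 0" "sball Q1 x r1 \<subseteq> a"
        by meson
      from Int.IH(2)[rule_format, OF xab(2)] obtain Q2 r2 where
        "finite Q2" "Q2 \<subseteq> P" "r2 > 0" "sball Q2 x r2 \<subseteq> b" by meson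
      then show "\<exists>Q r. finite Q \<and> Q \<subseteq> P \<and> r > 0 \<and> sball Q x r \<subseteq> a \<inter> b"
        using Q1 by (intro exI[of _ "Q1 \<union> Q2"] exI[of _ "min r1 r2"]) (auto simp: sball_def)
    qed
  next
    case (UN K)
    show ?case
    proof
      fix x assume "x \<in> \<Union>K"
      then obtain k where k: "k \<in> K" "x \<in> k" by blast
      from UN.IH[OF k(1)] k(2) obtain Q r where Qr: "finite Q" "Q \<subseteq> P" "r > 0" "sball Q x r \<subseteq> k"
        by meson
      have "sball Q x r \<subseteq> \<Union>K" using Qr(4) k(1) by (meson Union_upper subset_trans)
      then show "\<exists>Q r. finite Q \<and> Q \<subseteq> P \<and> r > 0 \<and> sball Q x r \<subseteq> \<Union>K"
        using Qr by meson
    qed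
  next
    case (Basis s)
    then have "s = UNIV \<or> (\<exists>p z r. s = {y. p (y - z) < r} \<and> p \<in> P \<and> r > 0)" by auto
    then consider "s = UNIV" | p z r where "s = {y. p (y - z) < r}" "p \<in> P" "r > 0" by fast
    then show ?case
    proof cases
      case 1 then show ?thesis by (auto intro!: exI[of _ "{}"] exI[of _ 1])
    next
      case 2
      show ?thesis
      proof
        fix x assume "x \<in> s"
        then have lt: "p (x - z) < r" using 2 by simp
        interpret snorm sm p using sn 2 by simp
        show "\<exists>Q r. finite Q \<and> Q \<subseteq> P \<and> r > 0 \<and> sball Q x r \<subseteq> s"
        proof (intro exI[of _ "{p}"] exI[of _ "r - p (x - z)"] conjI)
          show "sball {p} x (r - p (x - z)) \<subseteq> s"
          proof
            fix y assume "y \<in> sball {p} x (r - p (x - z))"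
            then have "p (y - x) < r - p (x - z)" by (simp add: sball_def)
            then have "p (y - z) < r" using triangle_diff[of y z x] by linarith
            then show "y \<in> s" using 2 by simp
          qed
        qed (use 2 lt in auto)
      qed
    qed
  qed
next
  assume H: "\<forall>x\<in>S. \<exists>Q r. finite Q \<and> Q \<subseteq> P \<and> r > 0 \<and> sball Q x r \<subseteq> S"
  then obtain Q where "\<forall>x\<in>S. \<exists>r. finite (Q x) \<and> Q x \<subseteq> P \<and> r > 0 \<and> sball (Q x) x r \<subseteq> S"
    by (metis (no_types, lifting) bchoice)
  then obtain r where Qr: "\<And>x. x \<in> S \<Longrightarrow> finite (Q x) \<and> Q x \<subseteq> P \<and> r x > 0 \<and> sball (Q x) x (r x) \<subseteq> S"
    by (metis (no_types, lifting) bchoice)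
  have "S = (\<Union>x\<in>S. sball (Q x) x (r x))"
  proof
    show "S \<subseteq> (\<Union>x\<in>S. sball (Q x) x (r x))"
    proof
      fix x assume "x \<in> S" then show "x \<in> (\<Union>x\<in>S. sball (Q x) x (r x))"
        using Qr[of x] center_sball[of "r x" "Q x" x] by (meson UN_iff)
    qed
    show "(\<Union>x\<in>S. sball (Q x) x (r x)) \<subseteq> S" using Qr by (simp add: UN_least)
  qed
  moreover have "openin (seminorm_topology P) (\<Union>x\<in>S. sball (Q x) x (r x))"
    using Qr openin_sball by (intro openin_Union) auto
  ultimately show "openin (seminorm_topology P) S" by simp
qed

lemma openin_ball_exists:
  assumes "openin (seminorm_topology P) S" "x \<in> S"
  obtains Q r where "finite Q" "Q \<subseteq> P" "r > 0" "sball Q x r \<subseteq> S"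
proof -
  from openin_char[THEN iffD1, OF assms(1), rule_format, OF assms(2)]
  obtain Q r where "finite Q" "Q \<subseteq> P" "r > 0" "sball Q x r \<subseteq> S" by auto
  then show thesis by (rule that)
qed

lemma limitin_iff:
  "limitin (seminorm_topology P) X l F \<longleftrightarrow> (\<forall>p\<in>P. \<forall>e>0. eventually (\<lambda>n. p (X n - l) < e) F)"
proof
  assume L: "limitin (seminorm_topology P) X l F"
  show "\<forall>p\<in>P. \<forall>e>0. eventually (\<lambda>n. p (X n - l) < e) F"
  proof (intro ballI allI impI)
    fix p e assume pe: "p \<in> P" "(e::real) > 0"
    have o: "openin (seminorm_topology P) {y. p (y - l) < e}"
      by (rule openin_semiball[OF pe])
    have "l \<in> {y. p (y - l) < e}"
      using snorm.zero[OF sn[OF pe(1)]] pe(2) by simp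
    then have "eventually (\<lambda>n. X n \<in> {y. p (y - l) < e}) F"
      using L o unfolding limitin_def by blast
    then show "eventually (\<lambda>n. p (X n - l) < e) F" by simp
  qed
next
  assume H: "\<forall>p\<in>P. \<forall>e>0. eventually (\<lambda>n. p (X n - l) < e) F"
  show "limitin (seminorm_topology P) X l F"
    unfolding limitin_def
  proof (intro conjI allI impI)
    fix S assume S: "openin (seminorm_topology P) S \<and> l \<in> S"
    obtain Q r where Q: "finite Q" "Q \<subseteq> P" "r > 0" "sball Q l r \<subseteq> S"
      using openin_ball_exists[of S l] S by blast
    have "\<forall>p\<in>Q. eventually (\<lambda>n. p (X n - l) < r) F"
      using Q(2,3) H by blast
    then have "eventually (\<lambda>n. \<forall>p\<in>Q. p (X n - l) < r) F"
      using Q(1) by (rule eventually_ball_finite[rotated])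
    then show "eventually (\<lambda>n. X n \<in> S) F"
    proof (rule eventually_mono)
      fix n assume "\<forall>p\<in>Q. p (X n - l) < r"
      then have "X n \<in> sball Q l r" by (simp add: sball_def)
      then show "X n \<in> S" using Q(4) by blast
    qed
  qed simp
qed

lemma continuous_map_into:
  assumes "\<And>y0 q e. q \<in> P \<Longrightarrow> e > 0 \<Longrightarrow> \<exists>Q r. finite Q \<and> Q \<subseteq> PE \<and> r > 0 \<and>
              (\<forall>y\<in>sball Q y0 r. q (g y - g y0) < e)"
    and E: "lcs smE PE"
  shows "continuous_map (seminorm_topology PE) (seminorm_topology P) g"
  unfolding seminorm_topology_def[of P]
proof (rule continuous_on_generated_topo)
  show "g ` topspace (seminorm_topology PE) \<subseteq> \<Union> (insert UNIV {{y. p (y - x) < r} |p x r. p \<in> P \<and> 0 < r})"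
    by auto
  fix S assume "S \<in> insert UNIV {{y. p (y - x) < r} |p x r. p \<in> P \<and> 0 < r}"
  then have "S = UNIV \<or> (\<exists>q c r. S = {y. q (y - c) < r} \<and> q \<in> P \<and> r > 0)" by auto
  then consider "S = UNIV" | q c r where "S = {y. q (y - c) < r}" "q \<in> P" "r > 0" by fast
  then show "openin (seminorm_topology PE) (g -` S \<inter> topspace (seminorm_topology PE))"
  proof cases
    case 1 then show ?thesis using openin_topspace[of "seminorm_topology PE"] by simp
  next
    case 2
    interpret q: snorm sm q using sn 2 by simp
    show ?thesis unfolding lcs.openin_char[OF E]
    proof
      fix y0 assume "y0 \<in> g -` S \<inter> topspace (seminorm_topology PE)"
      then have y0: "q (g y0 - c) < r" using 2 by simp
      obtain Q r' where Qr: "finite Q" "Q \<subseteq> PE" "r' > 0" "\<forall>y\<in>sball Q y0 r'. q (g y - g y0) < r - q (g y0 - c)"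
        using assms(1)[of q "r - q (g y0 - c)" y0] y0 2 by auto
      have "sball Q y0 r' \<subseteq> g -` S \<inter> topspace (seminorm_topology PE)"
      proof
        fix y assume "y \<in> sball Q y0 r'"
        then have "q (g y - g y0) < r - q (g y0 - c)" using Qr by auto
        then have "q (g y - c) < r" using q.triangle_diff[of "g y" c "g y0"] by linarith
        then show "y \<in> g -` S \<inter> topspace (seminorm_topology PE)" using 2 by simp
      qed
      then show "\<exists>Q r. finite Q \<and> Q \<subseteq> PE \<and> 0 < r \<and> sball Q y0 r \<subseteq> g -` S \<inter> topspace (seminorm_topology PE)"
        using Qr by meson
    qed
  qed
qed

end


section \<open>Multilinear algebra\<close>

lemma cml_ext: "cmultilinear smE smF n A \<Longrightarrow> (\<And>i. i < n \<Longrightarrow> v i = w i) \<Longrightarrow> A v = A w"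
  unfolding cmultilinear_def by blast

lemma cml_add: "cmultilinear smE smF n A \<Longrightarrow> i < n \<Longrightarrow> A (v(i := y + z)) = A (v(i := y)) + A (v(i := z))"
  unfolding cmultilinear_def clinear_map_def by blast

lemma cml_smult: "cmultilinear smE smF n A \<Longrightarrow> i < n \<Longrightarrow> A (v(i := smE c y)) = smF c (A (v(i := y)))"
  unfolding cmultilinear_def clinear_map_def by blast

lemma cml_homog:
  assumes A: "cmultilinear smE smF n A" and F: "cvsl smF"
  shows "A (\<lambda>_. smE c y) = smF (c ^ n) (A (\<lambda>_. y))"
proof -
  have "k \<le> n \<Longrightarrow> A (\<lambda>j. if j < k then smE c y else y) = smF (c ^ k) (A (\<lambda>_. y))" for k
  proof (induction k)
    case 0 then show ?case using cvsl.one[OF F] by simp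
  next
    case (Suc k)
    define g where "g = (\<lambda>j. if j < k then smE c y else y)"
    have e1: "(\<lambda>j. if j < Suc k then smE c y else y) = g(k := smE c y)"
      by (auto simp: g_def)
    have e2: "g(k := y) = g" by (auto simp: g_def)
    have "A (g(k := smE c y)) = smF c (A (g(k := y)))"
      using cml_smult[OF A, of k] Suc.prems by simp
    also have "\<dots> = smF c (smF (c ^ k) (A (\<lambda>_. y)))"
      using e2 Suc by (simp add: g_def)
    also have "\<dots> = smF (c ^ Suc k) (A (\<lambda>_. y))"
      using cvsl.mult[OF F, of c "c ^ k"] by simp
    finally show ?case using e1 by simp
  qed
  from this[of n] show ?thesis
    using cml_ext[OF A, of "\<lambda>_. smE c y" "\<lambda>j. if j < n then smE c y else y"] by simp
qed

lemma chom_homog: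
  assumes "chom_poly smE smF n p" "cvsl smF"
  shows "p (smE c y) = smF (c ^ n) (p y)"
  using assms cml_homog unfolding chom_poly_def by metis

lemma cml_zero: "cmultilinear smE smF n A \<Longrightarrow> i < n \<Longrightarrow> A (v(i := 0)) = 0"
proof -
  assume a: "cmultilinear smE smF n A" "i < n"
  have h: "A (v(i := 0 + 0)) = A (v(i := 0)) + A (v(i := 0))" by (rule cml_add[OF a])
  then have "A (v(i := 0)) = A (v(i := 0)) + A (v(i := 0))" by (simp only: add_0_left)
  then show ?thesis by (metis add_cancel_left_right)
qed

lemma cml_sum:
  assumes A: "cmultilinear smE smF n A" and i: "i < n" and S: "finite S"
  shows "A (v(i := \<Sum>a\<in>S. w a)) = (\<Sum>a\<in>S. A (v(i := w a)))"
  using S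
proof (induction S rule: finite_induct)
  case empty show ?case by (simp only: sum.empty) (rule cml_zero[OF A i])
next
  case (insert a S)
  have "A (v(i := \<Sum>a\<in>insert a S. w a)) = A (v(i := w a + (\<Sum>a\<in>S. w a)))"
    by (simp only: sum.insert[OF insert(1,2)])
  also have "\<dots> = A (v(i := w a)) + A (v(i := \<Sum>a\<in>S. w a))" by (rule cml_add[OF A i])
  also have "\<dots> = A (v(i := w a)) + (\<Sum>a\<in>S. A (v(i := w a)))" by (simp only: insert.IH)
  finally show ?case by (simp only: sum.insert[OF insert(1,2)])
qed

lemma cml_expand_aux:
  assumes A: "cmultilinear smE smF n A" and S: "finite S"
  shows "k \<le> n \<Longrightarrow> A (\<lambda>j. if j < k then (\<Sum>i\<in>S. w i) else u j) =
      (\<Sum>\<phi>\<in>PiE {..<k} (\<lambda>_. S). A (\<lambda>j. if j < k then w (\<phi> j) else u j))"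
proof (induction k arbitrary: u)
  case 0 then show ?case by simp
next
  case (Suc k)
  define v where "v = (\<lambda>j. if j < k then (\<Sum>i\<in>S. w i) else u j)"
  have e1: "(\<lambda>j. if j < Suc k then (\<Sum>i\<in>S. w i) else u j) = v(k := (\<Sum>i\<in>S. w i))"
    by (auto simp: v_def)
  have e2: "v(k := w i) = (\<lambda>j. if j < k then (\<Sum>i\<in>S. w i) else (u(k := w i)) j)" for i
    by (auto simp: v_def)
  have "A (\<lambda>j. if j < Suc k then (\<Sum>i\<in>S. w i) else u j) = (\<Sum>i\<in>S. A (v(k := w i)))"
    unfolding e1 using cml_sum[OF A _ S] Suc.prems by simp
  also have "\<dots> = (\<Sum>i\<in>S. \<Sum>\<phi>\<in>PiE {..<k} (\<lambda>_. S). A (\<lambda>j. if j < k then w (\<phi> j) else (u(k := w i)) j))"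
    unfolding e2 using Suc by simp
  also have "\<dots> = (\<Sum>(i, \<phi>)\<in>S \<times> PiE {..<k} (\<lambda>_. S). A (\<lambda>j. if j < k then w (\<phi> j) else (u(k := w i)) j))"
    by (simp add: sum.cartesian_product)
  also have "\<dots> = (\<Sum>(i, \<phi>)\<in>S \<times> PiE {..<k} (\<lambda>_. S). A (\<lambda>j. if j < Suc k then w ((\<phi>(k := i)) j) else u j))"
  proof -
    have eqf: "(\<lambda>j. if j < k then w (\<phi> j) else (u(k := w i)) j) = (\<lambda>j. if j < Suc k then w ((\<phi>(k := i)) j) else u j)" for i \<phi>
      by (auto simp: fun_eq_iff)
    show ?thesis by (simp only: eqf)
  qed
  also have "\<dots> = (\<Sum>\<psi>\<in>(\<lambda>(y, g). g(k := y)) ` (S \<times> PiE {..<k} (\<lambda>_. S)). A (\<lambda>j. if j < Suc k then w (\<psi> j) else u j))"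
  proof -
    have inj: "inj_on (\<lambda>(y, g). g(k := y)) (S \<times> PiE {..<k} (\<lambda>_. S))"
      using inj_combinator[of k "{..<k}" "\<lambda>_. S"] by simp
    show ?thesis by (subst sum.reindex[OF inj]) (simp add: comp_def case_prod_unfold)
  qed
  also have "(\<lambda>(y, g). g(k := y)) ` (S \<times> PiE {..<k} (\<lambda>_. S)) = PiE {..<Suc k} (\<lambda>_. S)"
    using PiE_insert_eq[of k "{..<k}" "\<lambda>_. S"] by (simp add: lessThan_Suc)
  finally show ?case .
qed

lemma cml_expand:
  assumes A: "cmultilinear smE smF n A" and S: "finite S"
  shows "A (\<lambda>_. \<Sum>i\<in>S. w i) = (\<Sum>\<phi>\<in>PiE {..<n} (\<lambda>_. S). A (\<lambda>j. w (\<phi> j)))"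
proof -
  have "A (\<lambda>_. \<Sum>i\<in>S. w i) = A (\<lambda>j. if j < n then (\<Sum>i\<in>S. w i) else 0)"
    by (rule cml_ext[OF A]) simp
  also have "\<dots> = (\<Sum>\<phi>\<in>PiE {..<n} (\<lambda>_. S). A (\<lambda>j. if j < n then w (\<phi> j) else 0))"
    using cml_expand_aux[OF A S, of n w "\<lambda>_. 0"] by simp
  also have "\<dots> = (\<Sum>\<phi>\<in>PiE {..<n} (\<lambda>_. S). A (\<lambda>j. w (\<phi> j)))"
    by (rule sum.cong[OF refl], rule cml_ext[OF A]) simp
  finally show ?thesis .
qed

lemma alt_pow_sum:
  fixes D :: "'x set"
  assumes "finite D"
  shows "(\<Sum>R\<in>Pow D. (-1::complex) ^ card R) = (if D = {} then 1 else 0)"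
  using assms
proof (induction D rule: finite_induct)
  case empty then show ?case by simp
next
  case (insert a D)
  have fin: "finite (Pow D)" using insert by simp
  have dis: "Pow D \<inter> insert a ` Pow D = {}" using insert by auto
  have inj: "inj_on (insert a) (Pow D)"
  proof (rule inj_onI)
    fix x y assume "x \<in> Pow D" "y \<in> Pow D" "insert a x = insert a y"
    then have "a \<notin> x" "a \<notin> y" using insert by auto
    then show "x = y" using \<open>insert a x = insert a y\<close> by (metis Diff_insert_absorb)
  qed
  have "(\<Sum>R\<in>Pow (insert a D). (-1::complex) ^ card R) =
        (\<Sum>R\<in>Pow D. (-1::complex) ^ card R) + (\<Sum>R\<in>insert a ` Pow D. (-1::complex) ^ card R)"
    unfolding Pow_insert using fin dis by (simp add: sum.union_disjoint)
  also have "(\<Sum>R\<in>insert a ` Pow D. (-1::complex) ^ card R) = (\<Sum>R\<in>Pow D. (-1::complex) ^ card (insert a R))"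
    using sum.reindex[OF inj] by simp
  also have "\<dots> = (\<Sum>R\<in>Pow D. - ((-1::complex) ^ card R))"
  proof (rule sum.cong[OF refl])
    fix R assume "R \<in> Pow D"
    then have "finite R" "a \<notin> R" using insert finite_subset by auto
    then show "(-1::complex) ^ card (insert a R) = - ((-1) ^ card R)" by simp
  qed
  finally show ?case by (simp add: sum_negf)
qed

lemma alt_superset_sum:
  fixes N T :: "'x set"
  assumes N: "finite N" and T: "T \<subseteq> N"
  shows "(\<Sum>S\<in>Pow N. if T \<subseteq> S then (-1::complex) ^ (card N - card S) else 0) = (if T = N then 1 else 0)"
proof -
  have fT: "finite T" using N T finite_subset by auto
  have fD: "finite (N - T)" using N by simp
  have "(\<Sum>S\<in>Pow N. if T \<subseteq> S then (-1::complex) ^ (card N - card S) else 0) =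
        (\<Sum>S\<in>{S\<in>Pow N. T \<subseteq> S}. (-1::complex) ^ (card N - card S))"
    using sum.inter_filter[of "Pow N" "\<lambda>S. (-1::complex)^(card N - card S)" "\<lambda>S. T \<subseteq> S"] N by simp
  also have "{S\<in>Pow N. T \<subseteq> S} = (\<lambda>R. T \<union> R) ` Pow (N - T)"
  proof
    show "{S \<in> Pow N. T \<subseteq> S} \<subseteq> (\<union>) T ` Pow (N - T)"
    proof
      fix S assume "S \<in> {S \<in> Pow N. T \<subseteq> S}"
      then have "S = T \<union> (S - T)" "S - T \<in> Pow (N - T)" by auto
      then show "S \<in> (\<union>) T ` Pow (N - T)" by (rule image_eqI)
    qed
    show "(\<union>) T ` Pow (N - T) \<subseteq> {S \<in> Pow N. T \<subseteq> S}" using T by auto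
  qed
  also have "(\<Sum>S\<in>(\<lambda>R. T \<union> R) ` Pow (N - T). (-1::complex) ^ (card N - card S)) =
      (\<Sum>R\<in>Pow (N - T). (-1::complex) ^ (card N - card (T \<union> R)))"
  proof (rule sum.reindex[unfolded comp_def])
    show "inj_on ((\<union>) T) (Pow (N - T))" unfolding inj_on_def by blast
  qed
  also have "\<dots> = (\<Sum>R\<in>Pow (N - T). (-1::complex) ^ card (N - T) * (-1) ^ card R)"
  proof (rule sum.cong[OF refl])
    fix R assume R: "R \<in> Pow (N - T)"
    then have fR: "finite R" using fD finite_subset by auto
    have cU: "card (T \<union> R) = card T + card R" using R fT fR by (subst card_Un_disjoint) auto
    have cN: "card N = card T + card (N - T)" using T N by (metis card_Diff_subset fT card_mono add_diff_inverse_nat not_less)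
    have cR: "card R \<le> card (N - T)" using R fD by (simp add: card_mono)
    have "card N - card (T \<union> R) = card (N - T) - card R" using cU cN by simp
    moreover have "(-1::complex) ^ (card (N - T) - card R) = (-1) ^ card (N - T) * (-1) ^ card R"
    proof -
      have "(-1::complex) ^ (card (N - T) - card R) * (-1) ^ card R = (-1) ^ card (N - T)"
        using cR by (simp add: power_add[symmetric])
      then show ?thesis
        by (metis (no_types, lifting) mult.assoc mult.right_neutral power_minus1_even power_mult_distrib[symmetric] mult_minus_left mult_1 power2_eq_square[symmetric] power_mult[symmetric] mult.commute)
    qed
    ultimately show "(-1::complex) ^ (card N - card (T \<union> R)) = (-1) ^ card (N - T) * (-1) ^ card R" by simp
  qed
  also have "\<dots> = (-1) ^ card (N - T) * (\<Sum>R\<in>Pow (N - T). (-1::complex) ^ card R)"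
    by (simp add: sum_distrib_left)
  also have "\<dots> = (if T = N then 1 else 0)"
    using alt_pow_sum[OF fD] T by auto
  finally show ?thesis .
qed


definition Bij :: "nat \<Rightarrow> (nat \<Rightarrow> nat) set" where
  "Bij n = {\<phi> \<in> PiE {..<n} (\<lambda>_. {..<n}). \<phi> ` {..<n} = {..<n}}"

lemma Bij_finite: "finite (Bij n)"
  unfolding Bij_def by (rule finite_subset[OF _ finite_PiE[of "{..<n}" "\<lambda>_. {..<n}"]]) auto

lemma Bij_card_pos: "card (Bij n) > 0"
proof -
  have "restrict id {..<n} \<in> Bij n" unfolding Bij_def by auto
  then show ?thesis using Bij_finite card_gt_0_iff by blast
qed

lemma polar:
  fixes B :: "(nat \<Rightarrow> 'a::ab_group_add) \<Rightarrow> complex"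
  assumes B: "cmultilinear smE times n B"
  shows "(\<Sum>S\<in>Pow {..<n}. (-1) ^ (n - card S) * B (\<lambda>_. \<Sum>i\<in>S. v i)) = (\<Sum>\<phi>\<in>Bij n. B (\<lambda>j. v (\<phi> j)))"
proof -
  define N where "N = {..<n}"
  define G where "G = (\<lambda>\<phi>. B (\<lambda>j. v (\<phi> j)))"
  have fN: "finite N" by (simp add: N_def)
  have fP: "finite (PiE N (\<lambda>_. N))" using fN by (simp add: finite_PiE)
  have cN: "card N = n" by (simp add: N_def)
  have step1: "B (\<lambda>_. \<Sum>i\<in>S. v i) = (\<Sum>\<phi>\<in>PiE N (\<lambda>_. N). if \<phi> ` N \<subseteq> S then G \<phi> else 0)"
    if S: "S \<in> Pow N" for S
  proof -
    have fS: "finite S" using S fN finite_subset by auto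
    have "B (\<lambda>_. \<Sum>i\<in>S. v i) = (\<Sum>\<phi>\<in>PiE N (\<lambda>_. S). G \<phi>)"
      using cml_expand[OF B fS, of v] by (simp add: N_def G_def)
    also have "PiE N (\<lambda>_. S) = {\<phi> \<in> PiE N (\<lambda>_. N). \<phi> ` N \<subseteq> S}"
      using S by (auto simp: PiE_iff extensional_def)
    also have "(\<Sum>\<phi>\<in>{\<phi> \<in> PiE N (\<lambda>_. N). \<phi> ` N \<subseteq> S}. G \<phi>) = (\<Sum>\<phi>\<in>PiE N (\<lambda>_. N). if \<phi> ` N \<subseteq> S then G \<phi> else 0)"
      by (rule sum.inter_filter[OF fP])
    finally show ?thesis .
  qed
  have "(\<Sum>S\<in>Pow N. (-1) ^ (n - card S) * B (\<lambda>_. \<Sum>i\<in>S. v i)) =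
        (\<Sum>S\<in>Pow N. \<Sum>\<phi>\<in>PiE N (\<lambda>_. N). (if \<phi> ` N \<subseteq> S then (-1) ^ (n - card S) else 0) * G \<phi>)"
    by (rule sum.cong[OF refl]) (auto simp: step1 sum_distrib_left intro!: sum.cong)
  also have "\<dots> = (\<Sum>\<phi>\<in>PiE N (\<lambda>_. N). \<Sum>S\<in>Pow N. (if \<phi> ` N \<subseteq> S then (-1) ^ (n - card S) else 0) * G \<phi>)"
    by (rule sum.swap)
  also have "\<dots> = (\<Sum>\<phi>\<in>PiE N (\<lambda>_. N). (if \<phi> ` N = N then 1 else 0) * G \<phi>)"
  proof (rule sum.cong[OF refl])
    fix \<phi> assume "\<phi> \<in> PiE N (\<lambda>_. N)"
    then have sub: "\<phi> ` N \<subseteq> N" by (auto simp: PiE_iff)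
    have "(\<Sum>S\<in>Pow N. (if \<phi> ` N \<subseteq> S then (-1::complex) ^ (n - card S) else 0) * G \<phi>) =
          (\<Sum>S\<in>Pow N. (if \<phi> ` N \<subseteq> S then (-1::complex) ^ (card N - card S) else 0)) * G \<phi>"
      unfolding cN sum_distrib_right by (rule refl)
    also have "\<dots> = (if \<phi> ` N = N then 1 else 0) * G \<phi>"
      using alt_superset_sum[OF fN sub] by simp
    finally show "(\<Sum>S\<in>Pow N. (if \<phi> ` N \<subseteq> S then (-1) ^ (n - card S) else 0) * G \<phi>) = (if \<phi> ` N = N then 1 else 0) * G \<phi>" .
  qed
  also have "\<dots> = (\<Sum>\<phi>\<in>Bij n. G \<phi>)"
    unfolding Bij_def N_def[symmetric]
    using sum.inter_filter[OF fP, of G "\<lambda>\<phi>. \<phi> ` N = N"] by (auto intro!: sum.cong)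
  finally show ?thesis by (simp add: N_def G_def)
qed

lemma Bij_slot:
  assumes B: "cmultilinear smE smF n B" and \<phi>: "\<phi> \<in> Bij n" and i: "i < n"
  obtains j0 where "j0 < n" "\<And>v y. B (\<lambda>j. (v(i := y)) (\<phi> j)) = B ((\<lambda>j. v (\<phi> j))(j0 := y))"
proof -
  have img: "\<phi> ` {..<n} = {..<n}" using \<phi> by (simp add: Bij_def)
  then obtain j0 where j0: "j0 < n" "\<phi> j0 = i" using i by (metis imageE lessThan_iff)
  have inj: "inj_on \<phi> {..<n}" using img by (simp add: eq_card_imp_inj_on)
  have "B (\<lambda>j. (v(i := y)) (\<phi> j)) = B ((\<lambda>j. v (\<phi> j))(j0 := y))" for v y
  proof (rule cml_ext[OF B])
    fix j assume j: "j < n"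
    have "\<phi> j = i \<longleftrightarrow> j = j0" using inj j j0 by (auto simp: inj_on_def)
    then show "(v(i := y)) (\<phi> j) = ((\<lambda>j. v (\<phi> j))(j0 := y)) j" by simp
  qed
  then show thesis using that j0 by blast
qed

definition Sym :: "nat \<Rightarrow> ((nat \<Rightarrow> 'a) \<Rightarrow> complex) \<Rightarrow> (nat \<Rightarrow> 'a) \<Rightarrow> complex" where
  "Sym n B v = (\<Sum>\<phi>\<in>Bij n. B (\<lambda>j. v (\<phi> j)))"

lemma Sym_add:
  assumes B: "cmultilinear smE times n B" and i: "i < n"
  shows "Sym n B (v(i := y + z)) = Sym n B (v(i := y)) + Sym n B (v(i := z))"
  unfolding Sym_def sum.distrib[symmetric]
proof (rule sum.cong[OF refl])
  fix \<phi> assume "\<phi> \<in> Bij n"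
  then obtain j0 where j0: "j0 < n" "\<And>v y. B (\<lambda>j. (v(i := y)) (\<phi> j)) = B ((\<lambda>j. v (\<phi> j))(j0 := y))"
    using Bij_slot[OF B _ i] by blast
  show "B (\<lambda>j. (v(i := y + z)) (\<phi> j)) = B (\<lambda>j. (v(i := y)) (\<phi> j)) + B (\<lambda>j. (v(i := z)) (\<phi> j))"
    unfolding j0(2) by (rule cml_add[OF B j0(1)])
qed

lemma Sym_smult:
  assumes B: "cmultilinear smE times n B" and i: "i < n"
  shows "Sym n B (v(i := smE c y)) = c * Sym n B (v(i := y))"
  unfolding Sym_def sum_distrib_left
proof (rule sum.cong[OF refl])
  fix \<phi> assume "\<phi> \<in> Bij n"
  then obtain j0 where j0: "j0 < n" "\<And>v y. B (\<lambda>j. (v(i := y)) (\<phi> j)) = B ((\<lambda>j. v (\<phi> j))(j0 := y))"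
    using Bij_slot[OF B _ i] by blast
  show "B (\<lambda>j. (v(i := smE c y)) (\<phi> j)) = c * B (\<lambda>j. (v(i := y)) (\<phi> j))"
    unfolding j0(2) by (rule cml_smult[OF B j0(1)])
qed

lemma Sym_const: "Sym n B (\<lambda>_. y) = of_nat (card (Bij n)) * B (\<lambda>_. y)"
  by (simp add: Sym_def)


lemma powser_unique:
  fixes a b :: "nat \<Rightarrow> complex"
  assumes s: "s > 0"
    and A: "\<And>z. norm z < s \<Longrightarrow> (\<lambda>n. a n * z ^ n) sums g z"
    and B: "\<And>z. norm z < s \<Longrightarrow> (\<lambda>n. b n * z ^ n) sums g z"
  shows "a n = b n"
proof -
  define d where "d = (\<lambda>n. a n - b n)"
  have D: "(\<lambda>n. d n * z ^ n) sums 0" if "norm z < s" for z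
    using sums_diff[OF A[OF that] B[OF that]] by (simp add: d_def algebra_simps)
  have "d n = 0"
  proof (induction n rule: less_induct)
    case (less n)
    have S: "(\<lambda>k. d (k + n) * z ^ k) sums 0" if z: "z \<noteq> 0" "norm z < s" for z
    proof -
      have "(\<lambda>k. d (k + n) * z ^ (k + n)) sums (0 - (\<Sum>k<n. d k * z ^ k))"
        using sums_split_initial_segment[OF D[OF z(2)], of n] by simp
      also have "(\<Sum>k<n. d k * z ^ k) = 0" using less by simp
      finally have "(\<lambda>k. d (k + n) * z ^ (k + n)) sums 0" by simp
      then have "(\<lambda>k. (1 / z ^ n) * (d (k + n) * z ^ (k + n))) sums ((1 / z ^ n) * 0)"
        by (rule sums_mult)
      moreover have "(1 / z ^ n) * (d (k + n) * z ^ (k + n)) = d (k + n) * z ^ k" for k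
        using z by (simp add: power_add field_simps)
      ultimately show ?thesis by simp
    qed
    have "((\<lambda>z::complex. 0::complex) \<longlongrightarrow> d (0 + n)) (at 0)"
      using powser_limit_0_strong[OF s, where a="\<lambda>k. d (k + n)" and f="\<lambda>_::complex. 0::complex"] S by auto
    then show ?case using LIM_unique[OF _ tendsto_const[of "0::complex" "at (0::complex)"]] by simp
  qed
  then show ?thesis by (simp add: d_def)
qed

lemma holo_local:
  assumes "\<And>z0. z0 \<in> S \<Longrightarrow> \<exists>\<delta>>0. \<exists>c. \<forall>z\<in>ball z0 \<delta>. (\<lambda>n. c n * (z - z0) ^ n) sums g z"
    and "open S"
  shows "g holomorphic_on S"
proof -
  have "\<exists>f'. (g has_field_derivative f') (at z0)" if z0: "z0 \<in> S" for z0
  proof -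
    obtain \<delta> c where \<delta>: "\<delta> > 0" "\<forall>z\<in>ball z0 \<delta>. (\<lambda>n. c n * (z - z0) ^ n) sums g z"
      using assms(1)[OF z0] by blast
    have "g holomorphic_on ball z0 \<delta>"
      by (rule power_series_holomorphic) (use \<delta> in auto)
    then show ?thesis using holomorphic_on_open[of "ball z0 \<delta>" g] \<delta>(1) by auto
  qed
  then show ?thesis using holomorphic_on_open[OF assms(2)] by blast
qed

lemma norm_cis_diff: "norm (cis a - cis b) \<le> \<bar>a - b\<bar>"
proof -
  have e: "cis a - cis b = cis b * (cis (a - b) - 1)"
    by (simp add: algebra_simps cis_mult)
  have "(norm (cis t - 1))\<^sup>2 = (2 * sin (t / 2))\<^sup>2" for t :: real
  proof -
    have "(norm (cis t - 1))\<^sup>2 = (cos t - 1)\<^sup>2 + (sin t)\<^sup>2"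
      by (simp add: cmod_def)
    also have "\<dots> = 2 - 2 * cos t" using sin_cos_squared_add[of t] by (simp add: power2_eq_square algebra_simps)
    also have "\<dots> = (2 * sin (t / 2))\<^sup>2"
      using cos_double_sin[of "t/2"] by (simp add: power2_eq_square algebra_simps)
    finally show ?thesis .
  qed
  then have "norm (cis t - 1) = \<bar>2 * sin (t / 2)\<bar>" for t :: real
    by (metis norm_ge_zero real_sqrt_abs real_sqrt_unique)
  moreover have "\<bar>2 * sin (t / 2)\<bar> \<le> \<bar>t\<bar>" for t :: real
    using abs_sin_x_le_abs_x[of "t/2"] by simp
  ultimately have "norm (cis t - 1) \<le> \<bar>t\<bar>" for t :: real by metis
  then show ?thesis unfolding e by (simp add: norm_mult)
qed

lemma roots_sum_zero:
  fixes d :: int and m :: nat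
  assumes "d \<noteq> 0" "\<bar>d\<bar> < int m"
  shows "(\<Sum>j<m. cis (2 * pi * real j * of_int d / real m)) = 0"
proof -
  have m: "m > 0" using assms by linarith
  define w where "w = cis (2 * pi * of_int d / real m)"
  have pw: "cis (2 * pi * real j * of_int d / real m) = w ^ j" for j
    unfolding w_def Complex.DeMoivre by (rule arg_cong[where f=cis]) (simp add: field_simps)
  have w1: "w \<noteq> 1"
  proof
    assume "w = 1"
    then obtain k :: int where k: "2 * pi * of_int d / real m = of_int k * (2 * pi)"
      unfolding w_def cis_eq_1_iff by blast
    then have "of_int d = of_int k * real m" using m by (simp add: field_simps)
    then have "d = k * int m" by (metis of_int_eq_iff of_int_mult of_int_of_nat_eq)
    with assms show False
      by (cases "k = 0") (auto simp: abs_mult dest!: mult_le_cancel_left1[THEN iffD1])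
  qed
  have wm: "w ^ m = 1"
  proof -
    have "w ^ m = cis (2 * pi * of_int d)" using m by (simp add: w_def Complex.DeMoivre)
    also have "\<dots> = 1" unfolding cis_eq_1_iff by (intro exI[of _ d]) simp
    finally show ?thesis .
  qed
  show ?thesis unfolding pw using w1 wm by (simp add: sum_gp_strict)
qed


lemma clcs_complex: "clcs (times :: complex \<Rightarrow> complex \<Rightarrow> complex) complex_seminorms"
  by (auto simp: clcs_def cvs_def cseminorm_def algebra_simps norm_mult norm_triangle_ineq)

lemma cvsl_times: "cvsl (times :: complex \<Rightarrow> complex \<Rightarrow> complex)"
  by (simp add: cvsl_def cvs_def algebra_simps)

lemma limitin_complex:
  assumes "limitin (seminorm_topology complex_seminorms) X s F"
  shows "(X \<longlongrightarrow> s) F"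
proof -
  have "\<forall>e>0. eventually (\<lambda>n. norm (X n - s) < e) F"
    using lcs.limitin_iff[OF lcs.intro[OF clcs_complex], THEN iffD1, OF assms] by simp
  then show ?thesis by (simp add: tendsto_iff dist_norm)
qed

locale setting =
  fixes smE :: "complex \<Rightarrow> 'a::ab_group_add \<Rightarrow> 'a" and PE :: "('a \<Rightarrow> real) set"
    and smF :: "complex \<Rightarrow> 'b::ab_group_add \<Rightarrow> 'b" and PF :: "('b \<Rightarrow> real) set"
    and U :: "'a set" and f :: "'a \<Rightarrow> 'b" and \<Lambda> :: "('b \<Rightarrow> complex) set"
  assumes E: "clcs smE PE"
    and F: "clcs smF PF" and Fcomplete: "seq_complete_lcs PF"
    and U: "openin (seminorm_topology PE) U"
    and \<Lambda>_lin: "\<forall>l\<in>\<Lambda>. clinear_map smF times l \<and>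
                   continuous_map (seminorm_topology PF) euclidean l"
    and \<Lambda>_sep: "\<forall>x. x \<noteq> 0 \<longrightarrow> (\<exists>l\<in>\<Lambda>. l x \<noteq> 0)"
    and f_cont: "continuous_map (subtopology (seminorm_topology PE) U) (seminorm_topology PF) f"
    and weak: "\<forall>l\<in>\<Lambda>. canalytic smE PE times complex_seminorms U (l \<circ> f)"
begin

sublocale E: lcs smE PE by (rule lcs.intro[OF E])
sublocale F: lcs smF PF by (rule lcs.intro[OF F])
sublocale sE: cvsl smE by (rule E.cv)
sublocale sF: cvsl smF by (rule F.cv)

lemma l_add: "l \<in> \<Lambda> \<Longrightarrow> l (u + w) = l u + l w"
  using \<Lambda>_lin by (simp add: clinear_map_def)
lemma l_sm: "l \<in> \<Lambda> \<Longrightarrow> l (smF c u) = c * l u"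
  using \<Lambda>_lin by (simp add: clinear_map_def)
lemma l_zero: "l \<in> \<Lambda> \<Longrightarrow> l 0 = 0"
  using l_add[of l 0 0] by simp
lemma l_minus: "l \<in> \<Lambda> \<Longrightarrow> l (- u) = - l u"
  using l_add[of l u "-u"] l_zero[of l] by (simp add: eq_neg_iff_add_eq_0 add.commute)
lemma l_diff: "l \<in> \<Lambda> \<Longrightarrow> l (u - w) = l u - l w"
  using l_add[of l u "-w"] l_minus[of l w] by simp
lemma l_sum: "l \<in> \<Lambda> \<Longrightarrow> l (\<Sum>i\<in>S. g i) = (\<Sum>i\<in>S. l (g i))"
  by (induction S rule: infinite_finite_induct) (auto simp: l_add l_zero)

lemma sep: "(\<And>l. l \<in> \<Lambda> \<Longrightarrow> l u = l w) \<Longrightarrow> u = w"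
proof (rule ccontr)
  assume H: "\<And>l. l \<in> \<Lambda> \<Longrightarrow> l u = l w" and "u \<noteq> w"
  then obtain l where "l \<in> \<Lambda>" "l (u - w) \<noteq> 0" using \<Lambda>_sep by (metis eq_iff_diff_eq_0)
  then show False using H[of l] l_diff[of l u w] by simp
qed

lemma l_lim:
  assumes "limitin (seminorm_topology PF) X s sequentially" "l \<in> \<Lambda>"
  shows "(\<lambda>k. l (X k)) \<longlonglongrightarrow> l s"
proof -
  have "continuous_map (seminorm_topology PF) euclidean l" using \<Lambda>_lin assms(2) by blast
  from continuous_map_limit[OF this assms(1)] show ?thesis by (simp add: comp_def)
qed

lemma f_cont_eps:
  assumes z0: "z0 \<in> U" and q: "q \<in> PF" and e: "e > 0"
  shows "\<exists>Q r. finite Q \<and> Q \<subseteq> PE \<and> r > 0 \<and> (\<forall>z\<in>U. z \<in> sball Q z0 r \<longrightarrow> q (f z - f z0) < e)"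
proof -
  have o: "openin (seminorm_topology PF) {u. q (u - f z0) < e}" by (rule openin_semiball[OF q e])
  have pre: "openin (subtopology (seminorm_topology PE) U) {z \<in> topspace (subtopology (seminorm_topology PE) U). f z \<in> {u. q (u - f z0) < e}}"
    by (rule openin_continuous_map_preimage[OF f_cont o])
  have ts: "topspace (subtopology (seminorm_topology PE) U) = U"
    by (simp only: topspace_subtopology topspace_st Int_UNIV_left)
  have "openin (subtopology (seminorm_topology PE) U) {z \<in> U. q (f z - f z0) < e}"
    using pre unfolding ts mem_Collect_eq .
  then obtain T where T: "openin (seminorm_topology PE) T" "{z \<in> U. q (f z - f z0) < e} = T \<inter> U"
    unfolding openin_subtopology by blast
  have "q (f z0 - f z0) < e" using e snorm.zero[OF F.sn[OF q]] by simp
  then have "z0 \<in> {z \<in> U. q (f z - f z0) < e}" using z0 by simp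
  then have "z0 \<in> T" using T(2) by simp
  then obtain Q r where Qr: "finite Q" "Q \<subseteq> PE" "r > 0" "sball Q z0 r \<subseteq> T"
    using E.openin_ball_exists[OF T(1)] by blast
  have "\<forall>z\<in>U. z \<in> sball Q z0 r \<longrightarrow> q (f z - f z0) < e"
  proof (intro ballI impI)
    fix z assume "z \<in> U" "z \<in> sball Q z0 r"
    then have "z \<in> T \<inter> U" using Qr by auto
    then have "z \<in> {z \<in> U. q (f z - f z0) < e}" using T(2) by simp
    then show "q (f z - f z0) < e" by simp
  qed
  then show ?thesis using Qr by meson
qed

lemma local_series:
  assumes l: "l \<in> \<Lambda>" and z0: "z0 \<in> U"
  obtains Q \<rho> pn where "finite Q" "Q \<subseteq> PE" "\<rho> > 0" "\<And>n. chom_poly smE times n (pn n)"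
    "\<And>y. y \<in> sball Q z0 \<rho> \<Longrightarrow> (\<lambda>n. pn n (y - z0)) sums l (f y)"
proof -
  have "canalytic smE PE times complex_seminorms U (l \<circ> f)" using weak l by blast
  then have "\<exists>V pn. openin (seminorm_topology PE) V \<and> z0 \<in> V \<and> V \<subseteq> U \<and>
        (\<forall>n. chom_poly smE times n (pn n) \<and>
             continuous_map (seminorm_topology PE) (seminorm_topology complex_seminorms) (pn n)) \<and>
        (\<forall>y\<in>V. limitin (seminorm_topology complex_seminorms) (\<lambda>N. \<Sum>n<N. pn n (y - z0)) ((l \<circ> f) y) sequentially)"
    using z0 unfolding canalytic_def by blast
  then obtain V pn where V: "openin (seminorm_topology PE) V" "z0 \<in> V" "V \<subseteq> U"
    "\<And>n. chom_poly smE times n (pn n)"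
    "\<And>y. y \<in> V \<Longrightarrow> limitin (seminorm_topology complex_seminorms) (\<lambda>N. \<Sum>n<N. pn n (y - z0)) ((l \<circ> f) y) sequentially"
    by blast
  obtain Q \<rho> where Q: "finite Q" "Q \<subseteq> PE" "\<rho> > 0" "sball Q z0 \<rho> \<subseteq> V"
    using E.openin_ball_exists[OF V(1,2)] by blast
  show thesis
  proof (rule that[OF Q(1-3) V(4)])
    fix y assume "y \<in> sball Q z0 \<rho>"
    then have "y \<in> V" using Q(4) by blast
    from limitin_complex[OF V(5)[OF this]] show "(\<lambda>n. pn n (y - z0)) sums l (f y)"
      by (simp add: sums_def)
  qed
qed

lemma line_series:
  assumes Q: "finite Q" "Q \<subseteq> PE" "\<rho> > 0" and pn: "\<And>n. chom_poly smE times n (pn n)"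
    and S: "\<And>y. y \<in> sball Q z0 \<rho> \<Longrightarrow> (\<lambda>n. pn n (y - z0)) sums g y"
    and z0: "z0 = x + smE \<zeta>0 h"
  shows "\<exists>\<delta>>0. \<forall>\<zeta>\<in>ball \<zeta>0 \<delta>. (\<lambda>n. pn n h * (\<zeta> - \<zeta>0) ^ n) sums g (x + smE \<zeta> h)"
proof -
  define C where "C = 1 + (\<Sum>p\<in>Q. p h)"
  have nn: "p \<in> Q \<Longrightarrow> p h \<ge> 0" for p using Q E.sn snorm.nonneg by blast
  have C: "C > 0" using nn by (simp add: C_def sum_nonneg add_pos_nonneg)
  have pC: "p \<in> Q \<Longrightarrow> p h < C" for p
    using member_le_sum[of p Q "\<lambda>p. p h"] nn Q(1) by (simp add: C_def)
  define \<delta> where "\<delta> = \<rho> / C"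
  have \<delta>: "\<delta> > 0" using Q(3) C by (simp add: \<delta>_def)
  have "(\<lambda>n. pn n h * (\<zeta> - \<zeta>0) ^ n) sums g (x + smE \<zeta> h)" if \<zeta>: "\<zeta> \<in> ball \<zeta>0 \<delta>" for \<zeta>
  proof -
    have d: "x + smE \<zeta> h - z0 = smE (\<zeta> - \<zeta>0) h" by (simp add: z0 sE.diff_left)
    have "x + smE \<zeta> h \<in> sball Q z0 \<rho>"
      unfolding sball_def
    proof (intro CollectI ballI)
      fix p assume p: "p \<in> Q"
      have "p (smE (\<zeta> - \<zeta>0) h) = norm (\<zeta> - \<zeta>0) * p h"
        using snorm.homog[OF E.sn] p Q(2) by blast
      also have "\<dots> \<le> norm (\<zeta> - \<zeta>0) * C" using pC[OF p] by (intro mult_left_mono) auto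
      also have "\<dots> < \<delta> * C" using \<zeta> C by (simp add: dist_norm norm_minus_commute)
      also have "\<dots> = \<rho>" using C by (simp add: \<delta>_def)
      finally show "p (x + smE \<zeta> h - z0) < \<rho>" by (simp add: d)
    qed
    from S[OF this] have "(\<lambda>n. pn n (smE (\<zeta> - \<zeta>0) h)) sums g (x + smE \<zeta> h)" by (simp add: d)
    moreover have "pn n (smE (\<zeta> - \<zeta>0) h) = pn n h * (\<zeta> - \<zeta>0) ^ n" for n
      using chom_homog[OF pn cvsl_times] by (simp add: mult.commute)
    ultimately show ?thesis by simp
  qed
  then show ?thesis using \<delta> by blast
qed

end


definition croot :: "nat \<Rightarrow> nat \<Rightarrow> nat \<Rightarrow> complex" where
  "croot m n i = (1 / of_nat m) * (\<Sum>j<m. cnj (cis (2 * pi * real j / real m)) ^ n * cis (2 * pi * real j / real m) ^ i)"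

lemma croot_term: "cnj (cis (2 * pi * real j / real m)) ^ n * cis (2 * pi * real j / real m) ^ i =
    cis (2 * pi * real j * of_int (int i - int n) / real m)"
  by (simp add: cis_cnj Complex.DeMoivre cis_mult power_mult_distrib[symmetric]) (rule arg_cong[where f=cis]; cases "m = 0"; simp add: field_simps)

lemma croot_same: "m > 0 \<Longrightarrow> croot m n n = 1"
  unfolding croot_def croot_term by simp

lemma croot_other: "i < m \<Longrightarrow> n < m \<Longrightarrow> i \<noteq> n \<Longrightarrow> croot m n i = 0"
  unfolding croot_def croot_term by (subst roots_sum_zero) auto

lemma croot_le: "m > 0 \<Longrightarrow> norm (croot m n i) \<le> 1"
proof -
  assume m: "m > 0"
  have "norm (\<Sum>j<m. cnj (cis (2 * pi * real j / real m)) ^ n * cis (2 * pi * real j / real m) ^ i) \<le>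
        (\<Sum>j<m. norm (cnj (cis (2 * pi * real j / real m)) ^ n * cis (2 * pi * real j / real m) ^ i))"
    by (rule norm_sum)
  also have "\<dots> = real m" by (simp add: norm_mult norm_power)
  finally show ?thesis using m by (simp add: croot_def norm_mult norm_divide field_simps)
qed

locale atx = setting +
  fixes x and Q0 and r :: real and Vx and qs
  assumes x: "x \<in> U" and Q0: "finite Q0" "Q0 \<subseteq> PE" "r > 0" "sball Q0 x r \<subseteq> U"
    and qs: "\<And>l. l \<in> \<Lambda> \<Longrightarrow> openin (seminorm_topology PE) (Vx l) \<and> x \<in> Vx l \<and>
       (\<forall>n. chom_poly smE times n (qs l n)) \<and> (\<forall>y\<in>Vx l. (\<lambda>n. qs l n (y - x)) sums l (f y))"
begin

abbreviation "W2 \<equiv> sball Q0 0 (r / 3)"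

lemma inU: assumes h: "h \<in> W2" and z: "norm \<zeta> < 3" shows "x + smE \<zeta> h \<in> U"
proof -
  have "x + smE \<zeta> h \<in> sball Q0 x r"
    unfolding sball_def
  proof (intro CollectI ballI)
    fix p assume p: "p \<in> Q0"
    then have sp: "snorm smE p" using Q0 E.sn by blast
    have ph: "p h < r / 3" "p h \<ge> 0" using h p snorm.nonneg[OF sp] by (auto simp: sball_def)
    have "p (x + smE \<zeta> h - x) = norm \<zeta> * p h" using snorm.homog[OF sp] by simp
    also have "\<dots> \<le> 3 * p h" using z ph by (intro mult_right_mono) auto
    also have "\<dots> < r" using ph by simp
    finally show "p (x + smE \<zeta> h - x) < r" .
  qed
  then show ?thesis using Q0 by blast
qed

lemma qs_homog: "l \<in> \<Lambda> \<Longrightarrow> qs l n (smE c y) = c ^ n * qs l n y"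
proof -
  assume l: "l \<in> \<Lambda>"
  from qs[OF l] have "chom_poly smE times n (qs l n)" by blast
  from chom_homog[OF this cvsl_times] show ?thesis by simp
qed

lemma SL:
  assumes l: "l \<in> \<Lambda>" and h: "h \<in> W2" and z: "norm \<zeta> < 3"
  shows "(\<lambda>n. qs l n h * \<zeta> ^ n) sums l (f (x + smE \<zeta> h))"
proof -
  define g where "g = (\<lambda>\<zeta>. l (f (x + smE \<zeta> h)))"
  have hol: "g holomorphic_on ball 0 3"
  proof (rule holo_local)
    fix \<zeta>0 :: complex assume "\<zeta>0 \<in> ball 0 3"
    then have z0: "x + smE \<zeta>0 h \<in> U" using inU[OF h] by simp
    obtain Q \<rho> pn where L: "finite Q" "Q \<subseteq> PE" "\<rho> > 0" "\<And>n. chom_poly smE times n (pn n)"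
      "\<And>y. y \<in> sball Q (x + smE \<zeta>0 h) \<rho> \<Longrightarrow> (\<lambda>n. pn n (y - (x + smE \<zeta>0 h))) sums l (f y)"
      using local_series[OF l z0] by blast
    from line_series[OF L(1-3) L(4) L(5) refl]
    obtain \<delta> where "\<delta> > 0" "\<forall>\<zeta>\<in>ball \<zeta>0 \<delta>. (\<lambda>n. pn n h * (\<zeta> - \<zeta>0) ^ n) sums g \<zeta>"
      unfolding g_def by blast
    then show "\<exists>\<delta>>0. \<exists>c. \<forall>z\<in>ball \<zeta>0 \<delta>. (\<lambda>n. c n * (z - \<zeta>0) ^ n) sums g z"
      by (intro exI[of _ \<delta>] conjI exI[of _ "\<lambda>n. pn n h"]) auto
  qed simp
  have PS: "(\<lambda>n. (deriv ^^ n) g 0 / fact n * w ^ n) sums g w" if "norm w < 3" for w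
    using holomorphic_power_series[OF hol, of w] that by simp
  obtain Q1 \<rho>1 where Q1: "finite Q1" "Q1 \<subseteq> PE" "\<rho>1 > 0" "sball Q1 x \<rho>1 \<subseteq> Vx l"
    using E.openin_ball_exists[of "Vx l" x] qs[OF l] by blast
  have S1: "(\<lambda>n. qs l n (y - (x + smE 0 h))) sums l (f y)" if "y \<in> sball Q1 (x + smE 0 h) \<rho>1" for y
    using that Q1(4) qs[OF l] by auto
  have ch: "\<And>n. chom_poly smE times n (qs l n)" using qs[OF l] by blast
  obtain \<delta>1 where \<delta>1: "\<delta>1 > 0" "\<forall>w\<in>ball 0 \<delta>1. (\<lambda>n. qs l n h * (w - 0) ^ n) sums g w"
    using line_series[OF Q1(1-3) ch S1 refl] unfolding g_def by blast
  have eq: "qs l n h = (deriv ^^ n) g 0 / fact n" for n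
  proof (rule powser_unique[of "min \<delta>1 3"])
    show "min \<delta>1 3 > 0" using \<delta>1 by simp
    fix w :: complex assume "norm w < min \<delta>1 3"
    then show "(\<lambda>n. qs l n h * w ^ n) sums g w" "(\<lambda>n. (deriv ^^ n) g 0 / fact n * w ^ n) sums g w"
      using \<delta>1(2) PS[of w] by auto
  qed
  show ?thesis using PS[OF z] unfolding eq g_def .
qed

lemma qs_summable: "l \<in> \<Lambda> \<Longrightarrow> h \<in> W2 \<Longrightarrow> summable (\<lambda>n. norm (qs l n h))"
proof -
  assume l: "l \<in> \<Lambda>" and h: "h \<in> W2"
  have "summable (\<lambda>n. qs l n h * 2 ^ n)" using SL[OF l h, of 2] by (auto simp: sums_iff)
  from powser_insidea[OF this, of 1] show ?thesis by simp
qed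

end


definition om :: "nat \<Rightarrow> nat \<Rightarrow> complex" where
  "om k j = cis (2 * pi * real j / real (2 ^ k))"

lemma norm_om[simp]: "norm (om k j) = 1" by (simp add: om_def)

context atx begin

definition Sv :: "nat \<Rightarrow> 'a \<Rightarrow> nat \<Rightarrow> 'b" where
  "Sv n h k = smF (1 / of_nat (2 ^ k)) (\<Sum>j<2 ^ k. smF (cnj (om k j) ^ n) (f (x + smE (om k j) h)))"

lemma tail_lim:
  assumes "summable (a :: nat \<Rightarrow> real)"
  shows "(\<lambda>m. \<Sum>i. a (i + m)) \<longlonglongrightarrow> 0"
proof -
  have "(\<lambda>m. suminf a - (\<Sum>i<m. a i)) \<longlonglongrightarrow> suminf a - suminf a"
    by (intro tendsto_intros summable_LIMSEQ assms)
  moreover have "(\<Sum>i. a (i + m)) = suminf a - (\<Sum>i<m. a i)" for m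
    using suminf_split_initial_segment[OF assms, of m] by simp
  ultimately show ?thesis by simp
qed

lemma R2:
  assumes l: "l \<in> \<Lambda>" and h: "h \<in> W2"
  shows "(\<lambda>k. l (Sv n h k)) \<longlonglongrightarrow> qs l n h"
proof -
  define a where "a = (\<lambda>i. qs l i h)"
  have suma: "summable (\<lambda>i. norm (a i))" using qs_summable[OF l h] by (simp add: a_def)
  define T where "T = (\<lambda>m. \<Sum>i. norm (a (i + m)))"
  have T0: "T \<longlonglongrightarrow> 0" unfolding T_def by (rule tail_lim[OF suma])
  have T20: "(\<lambda>k. T (2 ^ k)) \<longlonglongrightarrow> 0"
    using LIMSEQ_subseq_LIMSEQ[OF T0, of "\<lambda>k. 2 ^ k"] by (simp add: strict_mono_def comp_def)
  have main: "norm (l (Sv n h k) - a n) \<le> 2 * T (2 ^ k)" if nk: "n < 2 ^ k" for k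
  proof -
    define m :: nat where "m = 2 ^ k"
    have m: "m > 0" "n < m" using nk by (auto simp: m_def)
    have omk: "om k j = cis (2 * pi * real j / real m)" for j by (simp add: om_def m_def)
    have g: "(\<lambda>i. a i * om k j ^ i) sums l (f (x + smE (om k j) h))" for j
      using SL[OF l h, of "om k j"] by (simp add: a_def)
    have lS: "l (Sv n h k) = (\<Sum>j<m. (1 / of_nat m) * (cnj (om k j) ^ n * l (f (x + smE (om k j) h))))"
      by (simp add: Sv_def l_sm[OF l] l_sum[OF l] sum_distrib_left m_def)
    have "(\<lambda>i. \<Sum>j<m. (1 / of_nat m) * (cnj (om k j) ^ n * (a i * om k j ^ i))) sums l (Sv n h k)"
      unfolding lS by (intro sums_sum sums_mult g)
    moreover have "(\<Sum>j<m. (1 / of_nat m) * (cnj (om k j) ^ n * (a i * om k j ^ i))) = a i * croot m n i" for i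
      by (simp add: croot_def omk sum_distrib_left mult_ac)
    ultimately have s1: "(\<lambda>i. a i * croot m n i) sums l (Sv n h k)" by simp
    have s2: "(\<lambda>i. if i = n then a i else 0) sums a n" by (rule sums_single)
    have s3: "(\<lambda>i. a i * croot m n i - (if i = n then a i else 0)) sums (l (Sv n h k) - a n)"
      by (rule sums_diff[OF s1 s2])
    define b where "b = (\<lambda>i. if i < m then 0 else 2 * norm (a i))"
    have bnd: "norm (a i * croot m n i - (if i = n then a i else 0)) \<le> b i" for i
    proof (cases "i < m")
      case True
      then have "a i * croot m n i - (if i = n then a i else 0) = 0"
        using croot_same[OF m(1)] croot_other[OF True m(2)] by auto
      then show ?thesis using True by (simp add: b_def)
    next
      case False
      then have ne: "i \<noteq> n" using m by auto
      have "norm (a i * croot m n i) \<le> norm (a i) * 1"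
        unfolding norm_mult by (intro mult_left_mono croot_le m(1)) auto
      then have "norm (a i * croot m n i) \<le> 2 * norm (a i)" using norm_ge_zero[of "a i"] by linarith
      then show ?thesis using False ne by (simp add: b_def)
    qed
    have sb: "summable b"
      by (rule summable_comparison_test'[of "\<lambda>i. 2 * norm (a i)" 0])
         (use suma in \<open>auto simp: b_def summable_mult\<close>)
    have "norm (l (Sv n h k) - a n) = norm (\<Sum>i. a i * croot m n i - (if i = n then a i else 0))"
      using s3 by (simp add: sums_iff)
    also have "\<dots> \<le> suminf b" by (rule norm_suminf_le[OF bnd sb])
    also have "suminf b = (\<Sum>i. b (i + m)) + (\<Sum>i<m. b i)" by (rule suminf_split_initial_segment[OF sb])
    also have "(\<Sum>i<m. b i) = 0" by (simp add: b_def)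
    also have "(\<Sum>i. b (i + m)) = (\<Sum>i. 2 * norm (a (i + m)))" by (simp add: b_def)
    also have "\<dots> = 2 * T m"
      unfolding T_def by (rule suminf_mult) (rule summable_ignore_initial_segment[OF suma])
    finally show ?thesis by (simp add: m_def)
  qed
  show ?thesis
    unfolding LIMSEQ_iff
  proof (intro allI impI)
    fix e :: real assume e: "e > 0"
    obtain N1 where N1: "\<And>k. k \<ge> N1 \<Longrightarrow> norm (T (2 ^ k)) < e / 2"
    proof -
      have "e / 2 > 0" using e by simp
      then obtain N1 where "\<forall>k\<ge>N1. norm (T (2 ^ k) - 0) < e / 2"
        using T20 unfolding LIMSEQ_iff by blast
      then show thesis using that by auto
    qed
    show "\<exists>N. \<forall>k\<ge>N. norm (l (Sv n h k) - qs l n h) < e"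
    proof (intro exI[of _ "max N1 n"] allI impI)
      fix k assume k: "k \<ge> max N1 n"
      have "n < 2 ^ k" using k less_exp[of k] by linarith
      then have "norm (l (Sv n h k) - a n) \<le> 2 * T (2 ^ k)" by (rule main)
      also have "\<dots> < e" using N1[of k] k by simp
      finally show "norm (l (Sv n h k) - qs l n h) < e" by (simp add: a_def)
    qed
  qed
qed

end


context atx begin

definition Tf :: "nat \<Rightarrow> complex \<Rightarrow> 'a \<Rightarrow> 'b" where
  "Tf n \<zeta> h = smF (cnj \<zeta> ^ n) (f (x + smE \<zeta> h))"

lemma LOC:
  assumes h0: "h0 \<in> W2" and q: "q \<in> PF" and e: "e > 0" and z0: "\<zeta>0 \<in> sphere 0 1"
  shows "\<exists>Q1 \<rho>0. finite Q1 \<and> Q1 \<subseteq> PE \<and> \<rho>0 > 0 \<and>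
     (\<forall>\<zeta> h. \<zeta> \<in> sphere 0 1 \<longrightarrow> norm (\<zeta> - \<zeta>0) < \<rho>0 \<longrightarrow> h \<in> W2 \<longrightarrow> h \<in> sball Q1 h0 \<rho>0 \<longrightarrow>
        q (Tf n \<zeta> h - Tf n \<zeta>0 h0) < e / 2)"
proof -
  interpret q: snorm smF q using F.sn[OF q] .
  define w0 where "w0 = x + smE \<zeta>0 h0"
  have w0U: "w0 \<in> U" unfolding w0_def using inU[OF h0] z0 by simp
  obtain Q1 r1 where Q1: "finite Q1" "Q1 \<subseteq> PE" "r1 > 0"
    "\<And>z. z \<in> U \<Longrightarrow> z \<in> sball Q1 w0 r1 \<Longrightarrow> q (f z - f w0) < e / 4"
    using f_cont_eps[OF w0U q, of "e/4"] e by auto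
  define B0 where "B0 = q (f w0)"
  have B0: "B0 \<ge> 0" unfolding B0_def by (rule q.nonneg)
  have nn: "p \<in> Q1 \<Longrightarrow> p v \<ge> 0" for p v using Q1(2) E.sn snorm.nonneg by blast
  define C where "C = 1 + (\<Sum>p\<in>Q1. p h0)"
  have C1: "C \<ge> 1" using nn by (simp add: C_def sum_nonneg)
  have pC: "p \<in> Q1 \<Longrightarrow> p h0 \<le> C" for p
    using member_le_sum[of p Q1 "\<lambda>p. p h0"] nn Q1(1) by (simp add: C_def)
  define \<rho>0 where "\<rho>0 = min (r1 / (2 * C)) (e / (4 * (real n + 1) * (B0 + 1)))"
  have \<rho>0: "\<rho>0 > 0" using Q1(3) C1 e B0 by (simp add: \<rho>0_def)
  have \<rho>0a: "\<rho>0 * (2 * C) \<le> r1"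
  proof -
    have "\<rho>0 \<le> r1 / (2 * C)" unfolding \<rho>0_def by simp
    then show ?thesis using C1 by (simp add: pos_le_divide_eq)
  qed
  have \<rho>0b: "\<rho>0 * (4 * (real n + 1) * (B0 + 1)) \<le> e"
  proof -
    have "\<rho>0 \<le> e / (4 * (real n + 1) * (B0 + 1))" unfolding \<rho>0_def by simp
    moreover have "4 * (real n + 1) * (B0 + 1) > 0" using B0 by simp
    ultimately show ?thesis by (simp add: pos_le_divide_eq)
  qed
  have main: "q (Tf n \<zeta> h - Tf n \<zeta>0 h0) < e / 2"
    if \<zeta>: "\<zeta> \<in> sphere 0 1" "norm (\<zeta> - \<zeta>0) < \<rho>0" and h: "h \<in> W2" "h \<in> sball Q1 h0 \<rho>0" for \<zeta> h
  proof -
    define z where "z = x + smE \<zeta> h"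
    have zU: "z \<in> U" unfolding z_def using inU[OF h(1)] \<zeta> by simp
    have zd: "z - w0 = smE \<zeta> (h - h0) + smE (\<zeta> - \<zeta>0) h0"
      by (simp add: z_def w0_def sE.diff_right sE.diff_left)
    have "z \<in> sball Q1 w0 r1"
      unfolding sball_def
    proof (intro CollectI ballI)
      fix p assume p: "p \<in> Q1"
      interpret p: snorm smE p using E.sn p Q1(2) by blast
      have "p (z - w0) \<le> p (smE \<zeta> (h - h0)) + p (smE (\<zeta> - \<zeta>0) h0)"
        unfolding zd by (rule p.triangle)
      also have "\<dots> = p (h - h0) + norm (\<zeta> - \<zeta>0) * p h0" using \<zeta> by (simp add: p.homog)
      also have "\<dots> \<le> p (h - h0) + \<rho>0 * C"
        using \<zeta>(2) pC[OF p] p.nonneg[of h0] \<rho>0 by (intro add_left_mono mult_mono) auto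
      also have "\<dots> < \<rho>0 + \<rho>0 * C" using h(2) p by (simp add: sball_def)
      also have "\<dots> \<le> r1"
      proof -
        have a: "\<rho>0 * 1 \<le> \<rho>0 * C" by (rule mult_left_mono[OF C1]) (use \<rho>0 in simp)
        have b: "\<rho>0 * (2 * C) = 2 * (\<rho>0 * C)" by simp
        show ?thesis using a b \<rho>0a by linarith
      qed
      finally show "p (z - w0) < r1" .
    qed
    then have fz: "q (f z - f w0) < e / 4" using Q1(4) zU by blast
    have "q (Tf n \<zeta> h - Tf n \<zeta>0 h0) \<le> norm (cnj \<zeta> ^ n) * q (f z - f w0) + norm (cnj \<zeta> ^ n - cnj \<zeta>0 ^ n) * q (f w0)"
      unfolding Tf_def z_def[symmetric] w0_def[symmetric] by (rule q.scale_diff)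
    also have "norm (cnj \<zeta> ^ n) = 1" using \<zeta> by (simp add: norm_power)
    also have "norm (cnj \<zeta> ^ n - cnj \<zeta>0 ^ n) \<le> real n * norm (cnj \<zeta> - cnj \<zeta>0)"
      using \<zeta> z0 by (intro norm_power_diff) auto
    also have "norm (cnj \<zeta> - cnj \<zeta>0) = norm (\<zeta> - \<zeta>0)"
      by (metis complex_cnj_diff complex_mod_cnj)
    finally have "q (Tf n \<zeta> h - Tf n \<zeta>0 h0) \<le> 1 * q (f z - f w0) + real n * norm (\<zeta> - \<zeta>0) * B0"
      using B0 by (simp add: B0_def mult_right_mono)
    also have "real n * norm (\<zeta> - \<zeta>0) * B0 \<le> (real n + 1) * \<rho>0 * (B0 + 1)"
      using \<zeta>(2) B0 \<rho>0 by (intro mult_mono) auto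
    also have "(real n + 1) * \<rho>0 * (B0 + 1) \<le> e / 4" using \<rho>0b by (simp add: field_simps)
    finally show ?thesis using fz by simp
  qed
  show ?thesis using Q1(1,2) \<rho>0 main by blast
qed

lemma TL:
  assumes h0: "h0 \<in> W2" and q: "q \<in> PF" and e: "e > 0"
  obtains Q \<rho> \<delta> where "finite Q" "Q \<subseteq> PE" "\<rho> > 0" "\<delta> > 0"
    "\<And>\<zeta> \<zeta>' h. \<zeta> \<in> sphere 0 1 \<Longrightarrow> \<zeta>' \<in> sphere 0 1 \<Longrightarrow> norm (\<zeta> - \<zeta>') < \<delta> \<Longrightarrow> h \<in> W2 \<Longrightarrow>
        h \<in> sball Q h0 \<rho> \<Longrightarrow> q (Tf n \<zeta> h - Tf n \<zeta>' h0) < e"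
proof -
  interpret q: snorm smF q using F.sn[OF q] .
  have "\<forall>\<zeta>0\<in>sphere 0 1. \<exists>Q1 \<rho>0. finite Q1 \<and> Q1 \<subseteq> PE \<and> \<rho>0 > 0 \<and>
     (\<forall>\<zeta> h. \<zeta> \<in> sphere 0 1 \<longrightarrow> norm (\<zeta> - \<zeta>0) < \<rho>0 \<longrightarrow> h \<in> W2 \<longrightarrow> h \<in> sball Q1 h0 \<rho>0 \<longrightarrow>
        q (Tf n \<zeta> h - Tf n \<zeta>0 h0) < e / 2)"
    using LOC[OF h0 q e] by blast
  then obtain Q1 where "\<forall>\<zeta>0\<in>sphere 0 1. \<exists>\<rho>0. finite (Q1 \<zeta>0) \<and> Q1 \<zeta>0 \<subseteq> PE \<and> \<rho>0 > 0 \<and>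
     (\<forall>\<zeta> h. \<zeta> \<in> sphere 0 1 \<longrightarrow> norm (\<zeta> - \<zeta>0) < \<rho>0 \<longrightarrow> h \<in> W2 \<longrightarrow> h \<in> sball (Q1 \<zeta>0) h0 \<rho>0 \<longrightarrow>
        q (Tf n \<zeta> h - Tf n \<zeta>0 h0) < e / 2)"
    by (rule bchoice[elim_format]) blast
  then obtain \<rho>0 where R: "\<And>\<zeta>0. \<zeta>0 \<in> sphere 0 1 \<Longrightarrow> finite (Q1 \<zeta>0) \<and> Q1 \<zeta>0 \<subseteq> PE \<and> \<rho>0 \<zeta>0 > 0 \<and>
     (\<forall>\<zeta> h. \<zeta> \<in> sphere 0 1 \<longrightarrow> norm (\<zeta> - \<zeta>0) < \<rho>0 \<zeta>0 \<longrightarrow> h \<in> W2 \<longrightarrow> h \<in> sball (Q1 \<zeta>0) h0 (\<rho>0 \<zeta>0) \<longrightarrow>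
        q (Tf n \<zeta> h - Tf n \<zeta>0 h0) < e / 2)"
    by (rule bchoice[elim_format]) blast
  have cov: "sphere (0::complex) 1 \<subseteq> (\<Union>c\<in>sphere 0 1. ball c (\<rho>0 c / 2))"
  proof
    fix z :: complex assume "z \<in> sphere 0 1"
    then have "z \<in> ball z (\<rho>0 z / 2)" using R[of z] by simp
    then show "z \<in> (\<Union>c\<in>sphere 0 1. ball c (\<rho>0 c / 2))" using \<open>z \<in> sphere 0 1\<close> by blast
  qed
  obtain K where K: "K \<subseteq> sphere 0 1" "finite K" "sphere 0 1 \<subseteq> (\<Union>c\<in>K. ball c (\<rho>0 c / 2))"
    by (rule compactE_image[OF compact_sphere _ cov]) auto
  have Kne: "K \<noteq> {}" using K(3) by (metis UN_empty empty_iff mem_sphere_0 norm_one subset_empty)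
  define \<rho> where "\<rho> = Min (\<rho>0 ` K)"
  define Q where "Q = \<Union> (Q1 ` K)"
  have \<rho>pos: "\<rho> > 0" unfolding \<rho>_def using K R Kne by (subst Min_gr_iff) auto
  have \<rho>le: "c \<in> K \<Longrightarrow> \<rho> \<le> \<rho>0 c" for c unfolding \<rho>_def using K(2) by simp
  have Qfin: "finite Q" unfolding Q_def using K R by auto
  have QPE: "Q \<subseteq> PE" unfolding Q_def using K R by blast
  show thesis
  proof (rule that[OF Qfin QPE \<rho>pos, of "\<rho> / 2"])
    show "\<rho> / 2 > 0" using \<rho>pos by simp
    fix \<zeta> \<zeta>' :: complex and h assume z: "\<zeta> \<in> sphere 0 1" "\<zeta>' \<in> sphere 0 1" "norm (\<zeta> - \<zeta>') < \<rho> / 2"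
      and h: "h \<in> W2" "h \<in> sball Q h0 \<rho>"
    obtain c where c: "c \<in> K" "\<zeta> \<in> ball c (\<rho>0 c / 2)" using K(3) z(1) by blast
    have cs: "c \<in> sphere 0 1" using c K by blast
    have d1: "norm (\<zeta> - c) < \<rho>0 c" using c by (simp add: dist_norm norm_minus_commute) (smt (verit) R cs)
    have "\<zeta>' - c = (\<zeta>' - \<zeta>) + (\<zeta> - c)" by simp
    then have "norm (\<zeta>' - c) \<le> norm (\<zeta>' - \<zeta>) + norm (\<zeta> - c)" by (metis norm_triangle_ineq)
    moreover have "norm (\<zeta>' - \<zeta>) < \<rho>0 c / 2" using z(3) \<rho>le[OF c(1)] by (simp add: norm_minus_commute)
    moreover have "norm (\<zeta> - c) < \<rho>0 c / 2" using c by (simp add: dist_norm norm_minus_commute)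
    ultimately have d2: "norm (\<zeta>' - c) < \<rho>0 c" by simp
    have hc: "h \<in> sball (Q1 c) h0 (\<rho>0 c)"
      using h(2) \<rho>le[OF c(1)] c(1) unfolding sball_def Q_def by fastforce
    have h0c: "h0 \<in> sball (Q1 c) h0 (\<rho>0 c)" using E.center_sball R[OF cs] by blast
    have a1: "q (Tf n \<zeta> h - Tf n c h0) < e / 2" using R[OF cs] z(1) d1 h(1) hc by blast
    have a2: "q (Tf n \<zeta>' h0 - Tf n c h0) < e / 2" using R[OF cs] z(2) d2 h0 h0c by blast
    have "q (Tf n \<zeta> h - Tf n \<zeta>' h0) \<le> q (Tf n \<zeta> h - Tf n c h0) + q (Tf n c h0 - Tf n \<zeta>' h0)"
      by (rule q.triangle_diff)
    also have "q (Tf n c h0 - Tf n \<zeta>' h0) = q (Tf n \<zeta>' h0 - Tf n c h0)" by (rule q.commute)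
    finally show "q (Tf n \<zeta> h - Tf n \<zeta>' h0) < e" using a1 a2 by simp
  qed
qed

end


lemma sum_div_group:
  fixes G :: "nat \<Rightarrow> 'c::comm_monoid_add"
  shows "(\<Sum>j<m * d. G (j div d)) = (\<Sum>a<m. \<Sum>i<d. G a)"
proof -
  have "(\<Sum>j<m * d. G (j div d)) = (\<Sum>a<m. \<Sum>j\<in>{a * d..<a * d + d}. G (j div d))"
    by (rule sum.nat_group[symmetric])
  also have "\<dots> = (\<Sum>a<m. \<Sum>i<d. G a)"
  proof (rule sum.cong[OF refl])
    fix a assume "a \<in> {..<m}"
    have "(\<Sum>j\<in>{a * d..<a * d + d}. G (j div d)) = (\<Sum>j\<in>{a * d..<a * d + d}. G a)"
    proof (rule sum.cong[OF refl])
      fix j assume j: "j \<in> {a * d..<a * d + d}"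
      then have "d > 0" by auto
      then have "j div d = a" using j by (auto intro: div_nat_eqI simp: algebra_simps)
      then show "G (j div d) = G a" by simp
    qed
    also have "\<dots> = (\<Sum>i\<in>{0..<d}. G a)"
      using sum.shift_bounds_nat_ivl[of "\<lambda>_. G a" 0 "a * d" d] by (simp add: add.commute)
    finally show "(\<Sum>j\<in>{a * d..<a * d + d}. G (j div d)) = (\<Sum>i<d. G a)" by (simp add: atLeast0LessThan)
  qed
  finally show ?thesis .
qed

context atx begin

lemma Sv_Tf: "Sv n h k = smF (1 / of_nat (2 ^ k)) (\<Sum>j<2 ^ k. Tf n (om k j) h)"
  by (simp add: Sv_def Tf_def)

lemma avg_bound:
  assumes q: "q \<in> PF" and m: "m > 0" and b: "\<And>j. j < m \<Longrightarrow> q (v j) \<le> M"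
  shows "q (smF (1 / of_nat m) (\<Sum>j<m. v j)) \<le> M"
proof -
  interpret q: snorm smF q using F.sn[OF q] .
  have "q (smF (1 / of_nat m) (\<Sum>j<m. v j)) = (1 / real m) * q (\<Sum>j<m. v j)"
    by (simp add: q.homog norm_divide)
  also have "\<dots> \<le> (1 / real m) * (\<Sum>j<m. q (v j))"
    by (intro mult_left_mono q.sum) simp
  also have "\<dots> \<le> (1 / real m) * (\<Sum>j<m. M)"
    by (intro mult_left_mono sum_mono b) auto
  also have "\<dots> = M" using m by simp
  finally show ?thesis .
qed

lemma DY:
  assumes kk: "k \<le> k'"
  shows "Sv n h k = smF (1 / of_nat (2 ^ k')) (\<Sum>j<2 ^ k'. Tf n (om k (j div 2 ^ (k' - k))) h)"
proof -
  define d :: nat where "d = 2 ^ (k' - k)"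
  define m :: nat where "m = 2 ^ k"
  have md: "2 ^ k' = m * d" using kk by (simp add: m_def d_def power_add[symmetric])
  have d0: "d > 0" by (simp add: d_def)
  have "(\<Sum>j<2 ^ k'. Tf n (om k (j div d)) h) = (\<Sum>a<m. \<Sum>i<d. Tf n (om k a) h)"
    unfolding md by (rule sum_div_group)
  also have "\<dots> = (\<Sum>a<m. smF (of_nat d) (Tf n (om k a) h))" by (simp add: sF.of_nat_left)
  also have "\<dots> = smF (of_nat d) (\<Sum>a<m. Tf n (om k a) h)" by (simp add: sF.sum_right)
  finally have e: "(\<Sum>j<2 ^ k'. Tf n (om k (j div d)) h) = smF (of_nat d) (\<Sum>a<m. Tf n (om k a) h)" .
  have "smF (1 / of_nat (2 ^ k')) (smF (of_nat d) (\<Sum>a<m. Tf n (om k a) h)) =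
        smF (1 / of_nat (2 ^ k') * of_nat d) (\<Sum>a<m. Tf n (om k a) h)"
    by (simp add: sF.mult[symmetric])
  also have "1 / of_nat (2 ^ k') * of_nat d = (1 / of_nat m :: complex)"
    using d0 unfolding md by (simp add: field_simps)
  finally show ?thesis unfolding Sv_Tf e d_def[symmetric] m_def by simp
qed

lemma om_close:
  assumes kk: "k \<le> k'"
  shows "norm (om k' j - om k (j div 2 ^ (k' - k))) < 2 * pi / 2 ^ k"
proof -
  define d :: nat where "d = 2 ^ (k' - k)"
  have md: "(2::real) ^ k' = 2 ^ k * real d" using kk by (simp add: d_def power_add[symmetric])
  have d0: "d > 0" by (simp add: d_def)
  have jd: "real j = real d * real (j div d) + real (j mod d)"
    by (metis div_mult_mod_eq of_nat_add of_nat_mult mult.commute)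
  define P :: real where "P = 2 ^ k'"
  have P: "P > 0" by (simp add: P_def)
  have Bq: "2 * pi * real (j div d) / real (2 ^ k) = 2 * pi * (real d * real (j div d)) / P"
    using d0 md unfolding P_def by (simp add: field_simps)
  have "2 * pi * real j / real (2 ^ k') - 2 * pi * real (j div d) / real (2 ^ k) =
        (2 * pi * real j - 2 * pi * (real d * real (j div d))) / P"
    unfolding Bq by (simp add: P_def diff_divide_distrib)
  also have "\<dots> = 2 * pi * (real j - real d * real (j div d)) / P" by (simp add: algebra_simps)
  also have "\<dots> = 2 * pi * real (j mod d) / P" using jd by simp
  finally have AB: "2 * pi * real j / real (2 ^ k') - 2 * pi * real (j div d) / real (2 ^ k) = 2 * pi * real (j mod d) / P" .
  have lt: "real (j mod d) < real d" using d0 by simp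
  have "2 * pi * real (j mod d) / P < 2 * pi * real d / P"
    using lt P pi_gt_zero by (intro divide_strict_right_mono) auto
  also have "2 * pi * real d / P = 2 * pi / 2 ^ k" using md d0 unfolding P_def by (simp add: field_simps)
  finally have "\<bar>2 * pi * real j / real (2 ^ k') - 2 * pi * real (j div d) / real (2 ^ k)\<bar> < 2 * pi / 2 ^ k"
    unfolding AB using P pi_gt_zero by simp
  then show ?thesis
    using norm_cis_diff[of "2 * pi * real j / real (2 ^ k')" "2 * pi * real (j div d) / real (2 ^ k)"]
    unfolding om_def d_def by linarith
qed

lemma R1:
  assumes h: "h \<in> W2"
  shows "seminorm_Cauchy PF (Sv n h)"
  unfolding seminorm_Cauchy_def
proof (intro ballI allI impI)
  fix q and e :: real assume q: "q \<in> PF" and e: "e > 0"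
  interpret q: snorm smF q using F.sn[OF q] .
  obtain Q \<rho> \<delta> where T: "finite Q" "Q \<subseteq> PE" "\<rho> > 0" "\<delta> > 0"
    "\<And>\<zeta> \<zeta>' h'. \<zeta> \<in> sphere 0 1 \<Longrightarrow> \<zeta>' \<in> sphere 0 1 \<Longrightarrow> norm (\<zeta> - \<zeta>') < \<delta> \<Longrightarrow> h' \<in> W2 \<Longrightarrow>
        h' \<in> sball Q h \<rho> \<Longrightarrow> q (Tf n \<zeta> h' - Tf n \<zeta>' h) < e / 2"
    using TL[OF h q, of "e/2" n] e by auto
  have hc: "h \<in> sball Q h \<rho>" using E.center_sball T by blast
  obtain N where N: "2 * pi / \<delta> < 2 ^ N" using real_arch_pow[of 2 "2 * pi / \<delta>"] by auto
  have key: "q (Sv n h k' - Sv n h k) \<le> e / 2" if kk: "N \<le> k" "k \<le> k'" for k k'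
  proof -
    define d :: nat where "d = 2 ^ (k' - k)"
    have "Sv n h k' - Sv n h k = smF (1 / of_nat (2 ^ k')) (\<Sum>j<2 ^ k'. Tf n (om k' j) h - Tf n (om k (j div d)) h)"
      unfolding Sv_Tf[of n h k'] DY[OF kk(2)] d_def by (simp add: sF.diff_right sum_subtractf)
    also have "q \<dots> \<le> e / 2"
    proof (rule avg_bound[OF q])
      fix j :: nat assume "j < 2 ^ k'"
      have "2 * pi / 2 ^ k \<le> 2 * pi / 2 ^ N" using kk(1) pi_gt_zero
        by (intro divide_left_mono power_increasing) auto
      also have "\<dots> < \<delta>" using N T(4) by (simp add: field_simps)
      finally have "norm (om k' j - om k (j div d)) < \<delta>" using om_close[OF kk(2), of j] unfolding d_def by linarith
      then show "q (Tf n (om k' j) h - Tf n (om k (j div d)) h) \<le> e / 2"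
        using T(5)[of "om k' j" "om k (j div d)" h] h hc by simp
    qed simp
    finally show ?thesis .
  qed
  show "\<exists>N. \<forall>m\<ge>N. \<forall>n'\<ge>N. q (Sv n h m - Sv n h n') < e"
  proof (intro exI[of _ N] allI impI)
    fix m n' assume m: "m \<ge> N" and n': "n' \<ge> N"
    show "q (Sv n h m - Sv n h n') < e"
    proof (cases "n' \<le> m")
      case True then show ?thesis using key[OF n' True] e by simp
    next
      case False
      then have "q (Sv n h n' - Sv n h m) \<le> e / 2" using key[OF m] by simp
      then show ?thesis using q.commute[of "Sv n h m" "Sv n h n'"] e by simp
    qed
  qed
qed

end


context atx begin

definition Lim :: "nat \<Rightarrow> 'a \<Rightarrow> 'b" where
  "Lim n h = (SOME u. limitin (seminorm_topology PF) (Sv n h) u sequentially)"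

lemma LimP: "h \<in> W2 \<Longrightarrow> limitin (seminorm_topology PF) (Sv n h) (Lim n h) sequentially"
proof -
  assume h: "h \<in> W2"
  have "\<exists>u. limitin (seminorm_topology PF) (Sv n h) u sequentially"
    using Fcomplete R1[OF h] unfolding seq_complete_lcs_def by blast
  then show ?thesis unfolding Lim_def by (rule someI_ex)
qed

lemma Lim_l: "h \<in> W2 \<Longrightarrow> l \<in> \<Lambda> \<Longrightarrow> l (Lim n h) = qs l n h"
proof -
  assume h: "h \<in> W2" and l: "l \<in> \<Lambda>"
  have A: "(\<lambda>k. l (Sv n h k)) \<longlonglongrightarrow> l (Lim n h)" by (rule l_lim[OF LimP[OF h] l])
  have B: "(\<lambda>k. l (Sv n h k)) \<longlonglongrightarrow> qs l n h" by (rule R2[OF l h])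
  show ?thesis by (rule LIMSEQ_unique[OF A B])
qed

lemma scale_exists:
  assumes "\<rho>' > 0"
  shows "\<exists>t::real. t \<ge> 1 \<and> (\<forall>p\<in>Q0. p y < t * \<rho>')"
proof -
  define t where "t = 1 + (\<Sum>p\<in>Q0. p y) / \<rho>'"
  have nn: "p \<in> Q0 \<Longrightarrow> p y \<ge> 0" for p using Q0 E.sn snorm.nonneg by blast
  have t1: "t \<ge> 1" using nn assms by (simp add: t_def sum_nonneg)
  have "p y < t * \<rho>'" if p: "p \<in> Q0" for p
  proof -
    have "p y \<le> (\<Sum>p\<in>Q0. p y)" using member_le_sum[of p Q0 "\<lambda>p. p y"] nn Q0(1) p by simp
    also have "\<dots> < t * \<rho>'" using assms by (simp add: t_def field_simps)
    finally show ?thesis .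
  qed
  then show ?thesis using t1 by blast
qed

lemma scale_in:
  assumes t: "t \<ge> 1" "\<forall>p\<in>Q0. p y < t * \<rho>'"
  shows "smE (of_real (1 / t)) y \<in> sball Q0 0 \<rho>'"
  unfolding sball_def
proof (intro CollectI ballI)
  fix p assume p: "p \<in> Q0"
  interpret p: snorm smE p using E.sn p Q0 by blast
  have n: "norm (complex_of_real (1 / t)) = 1 / t" using t by (simp add: norm_divide)
  have "p (smE (of_real (1 / t)) y - 0) = p y / t" using n by (simp add: p.homog)
  also have "\<dots> < \<rho>'" using t p by (simp add: divide_less_eq mult.commute)
  finally show "p (smE (of_real (1 / t)) y - 0) < \<rho>'" .
qed

definition pn :: "nat \<Rightarrow> 'a \<Rightarrow> 'b" where
  "pn n y = (SOME u. \<forall>l\<in>\<Lambda>. l u = qs l n y)"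

lemma PN: "l \<in> \<Lambda> \<Longrightarrow> l (pn n y) = qs l n y"
proof -
  assume l: "l \<in> \<Lambda>"
  obtain t where t: "t \<ge> 1" "\<forall>p\<in>Q0. p y < t * (r / 3)"
    using scale_exists[of "r / 3" y] Q0(3) by auto
  define h where "h = smE (of_real (1 / t)) y"
  have h: "h \<in> W2" unfolding h_def by (rule scale_in[OF t])
  define u where "u = smF (of_real t ^ n) (Lim n h)"
  have "\<forall>l\<in>\<Lambda>. l u = qs l n y"
  proof
    fix l assume l: "l \<in> \<Lambda>"
    have "l u = of_real t ^ n * qs l n h" unfolding u_def by (simp add: l_sm[OF l] Lim_l[OF h l])
    also have "\<dots> = of_real t ^ n * (of_real (1 / t) ^ n * qs l n y)" unfolding h_def by (simp add: qs_homog[OF l])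
    also have "\<dots> = qs l n y" using t by (simp add: power_mult_distrib[symmetric] field_simps)
    finally show "l u = qs l n y" .
  qed
  then have "\<forall>l\<in>\<Lambda>. l (pn n y) = qs l n y" unfolding pn_def by (rule someI)
  then show ?thesis using l by blast
qed

lemma pn_Lim: "h \<in> W2 \<Longrightarrow> pn n h = Lim n h"
  by (rule sep) (simp add: PN Lim_l)

lemma pn_homog: "pn n (smE c y) = smF (c ^ n) (pn n y)"
  by (rule sep) (simp add: PN l_sm qs_homog)

lemma lim_bound:
  assumes X: "limitin (seminorm_topology PF) X u sequentially" and q: "q \<in> PF"
    and b: "\<And>k. q (X k) \<le> M"
  shows "q u \<le> M"
proof (rule field_le_epsilon)
  fix e :: real assume e: "e > 0"
  interpret q: snorm smF q using F.sn[OF q] .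
  have "eventually (\<lambda>k. q (X k - u) < e) sequentially" using F.limitin_iff[THEN iffD1, OF X] q e by blast
  then obtain N where "\<forall>k\<ge>N. q (X k - u) < e" unfolding eventually_sequentially by blast
  then have k: "q (X N - u) < e" by simp
  have "q u \<le> q (X N) + q (u - X N)"
    using q.triangle[of "X N" "u - X N"] by simp
  then show "q u \<le> M + e" using k b[of N] q.commute[of "X N" u] by linarith
qed

lemma lim_diff:
  assumes "limitin (seminorm_topology PF) X a sequentially" "limitin (seminorm_topology PF) Y b sequentially"
  shows "limitin (seminorm_topology PF) (\<lambda>k. X k - Y k) (a - b) sequentially"
  unfolding F.limitin_iff
proof (intro ballI allI impI)
  fix q and e :: real assume q: "q \<in> PF" and e: "e > 0"
  interpret q: snorm smF q using F.sn[OF q] .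
  have "eventually (\<lambda>k. q (X k - a) < e / 2) sequentially" "eventually (\<lambda>k. q (Y k - b) < e / 2) sequentially"
    using F.limitin_iff[THEN iffD1, OF assms(1)] F.limitin_iff[THEN iffD1, OF assms(2)] q e half_gt_zero by blast+
  then show "eventually (\<lambda>k. q (X k - Y k - (a - b)) < e) sequentially"
  proof eventually_elim
    case (elim k)
    have eq: "X k - Y k - (a - b) = (X k - a) + (b - Y k)" by (simp add: algebra_simps)
    have "q (X k - Y k - (a - b)) = q ((X k - a) + (b - Y k))" by (simp only: eq)
    also have "\<dots> \<le> q (X k - a) + q (b - Y k)" by (rule q.triangle)
    also have "q (b - Y k) = q (Y k - b)" by (rule q.commute)
    finally have "q (X k - Y k - (a - b)) \<le> q (X k - a) + q (Y k - b)" .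
    then show ?case using elim by simp
  qed
qed

lemma Sv_bound:
  assumes q: "q \<in> PF" and b: "\<And>\<zeta>. \<zeta> \<in> sphere 0 1 \<Longrightarrow> q (f (x + smE \<zeta> h)) \<le> M"
  shows "q (Sv n h k) \<le> M"
  unfolding Sv_def
proof (rule avg_bound[OF q])
  fix j assume "j < (2::nat) ^ k"
  interpret q: snorm smF q using F.sn[OF q] .
  show "q (smF (cnj (om k j) ^ n) (f (x + smE (om k j) h))) \<le> M"
    using b[of "om k j"] by (simp add: q.homog norm_power)
qed simp

lemma Sv_diff_bound:
  assumes q: "q \<in> PF" and b: "\<And>\<zeta>. \<zeta> \<in> sphere 0 1 \<Longrightarrow> q (f (x + smE \<zeta> h) - f (x + smE \<zeta> h0)) \<le> M"
  shows "q (Sv n h k - Sv n h0 k) \<le> M"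
proof -
  have "Sv n h k - Sv n h0 k = smF (1 / of_nat (2 ^ k))
     (\<Sum>j<2 ^ k. smF (cnj (om k j) ^ n) (f (x + smE (om k j) h) - f (x + smE (om k j) h0)))"
    unfolding Sv_def by (simp add: sF.diff_right sum_subtractf)
  also have "q \<dots> \<le> M"
  proof (rule avg_bound[OF q])
    fix j assume "j < (2::nat) ^ k"
    interpret q: snorm smF q using F.sn[OF q] .
    show "q (smF (cnj (om k j) ^ n) (f (x + smE (om k j) h) - f (x + smE (om k j) h0))) \<le> M"
      using b[of "om k j"] by (simp add: q.homog norm_power)
  qed simp
  finally show ?thesis .
qed

lemma pn_bound:
  assumes h: "h \<in> W2" and q: "q \<in> PF" and b: "\<And>\<zeta>. \<zeta> \<in> sphere 0 1 \<Longrightarrow> q (f (x + smE \<zeta> h)) \<le> M"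
  shows "q (pn n h) \<le> M"
  unfolding pn_Lim[OF h] by (rule lim_bound[OF LimP[OF h] q Sv_bound[OF q b]])

lemma pn_diff_bound:
  assumes h: "h \<in> W2" and h0: "h0 \<in> W2" and q: "q \<in> PF"
    and b: "\<And>\<zeta>. \<zeta> \<in> sphere 0 1 \<Longrightarrow> q (f (x + smE \<zeta> h) - f (x + smE \<zeta> h0)) \<le> M"
  shows "q (pn n h - pn n h0) \<le> M"
  unfolding pn_Lim[OF h] pn_Lim[OF h0]
  by (rule lim_bound[OF lim_diff[OF LimP[OF h] LimP[OF h0]] q Sv_diff_bound[OF q b]])

end


context atx begin

lemma Tf0: "Tf 0 \<zeta> h = f (x + smE \<zeta> h)" by (simp add: Tf_def)

lemma BS:
  assumes h: "h \<in> W2" and q: "q \<in> PF"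
  shows "\<exists>M\<ge>0. \<forall>\<zeta>\<in>sphere 0 1. q (f (x + smE \<zeta> h)) \<le> M"
proof -
  interpret q: snorm smF q using F.sn[OF q] .
  define \<phi> where "\<phi> = (\<lambda>\<zeta>. q (f (x + smE \<zeta> h)))"
  have hc: "\<And>Q \<rho>. \<rho> > 0 \<Longrightarrow> h \<in> sball Q h \<rho> \<or> \<not> Q \<subseteq> PE"
    using E.center_sball by blast
  have "continuous_on (sphere 0 1) \<phi>"
    unfolding continuous_on_iff
  proof (intro ballI allI impI)
    fix \<zeta>0 :: complex and e :: real assume z0: "\<zeta>0 \<in> sphere 0 1" and e: "e > 0"
    obtain Q \<rho> \<delta> where T: "finite Q" "Q \<subseteq> PE" "\<rho> > 0" "\<delta> > 0"
      "\<And>\<zeta> \<zeta>' h'. \<zeta> \<in> sphere 0 1 \<Longrightarrow> \<zeta>' \<in> sphere 0 1 \<Longrightarrow> norm (\<zeta> - \<zeta>') < \<delta> \<Longrightarrow> h' \<in> W2 \<Longrightarrow>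
        h' \<in> sball Q h \<rho> \<Longrightarrow> q (Tf 0 \<zeta> h' - Tf 0 \<zeta>' h) < e"
      using TL[OF h q e, of 0] by auto
    have hin: "h \<in> sball Q h \<rho>" using hc[OF T(3), of Q] T(2) by blast
    show "\<exists>\<delta>>0. \<forall>x'\<in>sphere 0 1. dist x' \<zeta>0 < \<delta> \<longrightarrow> dist (\<phi> x') (\<phi> \<zeta>0) < e"
    proof (intro exI[of _ \<delta>] conjI ballI impI)
      fix \<zeta> assume "\<zeta> \<in> sphere 0 1" "dist \<zeta> \<zeta>0 < \<delta>"
      then have "q (Tf 0 \<zeta> h - Tf 0 \<zeta>0 h) < e" using T(5)[of \<zeta> \<zeta>0 h] z0 h hin by (simp add: dist_norm)
      then show "dist (\<phi> \<zeta>) (\<phi> \<zeta>0) < e"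
        unfolding \<phi>_def dist_real_def Tf0 using q.rev_tri by (meson le_less_trans)
    qed (use T in auto)
  qed
  from continuous_attains_sup[OF compact_sphere _ this]
  obtain z where "\<forall>y\<in>sphere 0 1. \<phi> y \<le> \<phi> z" by (metis norm_one mem_sphere_0 empty_iff)
  moreover have "\<phi> z \<ge> 0" unfolding \<phi>_def by (rule q.nonneg)
  ultimately show ?thesis unfolding \<phi>_def by blast
qed

lemma CT: "continuous_map (seminorm_topology PE) (seminorm_topology PF) (pn n)"
proof (rule F.continuous_map_into[OF _ E.lcs_axioms])
  fix y0 q and e :: real assume q: "q \<in> PF" and e: "e > 0"
  interpret q: snorm smF q using F.sn[OF q] .
  obtain t where t: "t \<ge> 1" "\<forall>p\<in>Q0. p y0 < t * (r / 6)"
    using scale_exists[of "r / 6" y0] Q0(3) by auto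
  have t0: "t > 0" using t by simp
  define h0 where "h0 = smE (of_real (1 / t)) y0"
  have h06: "h0 \<in> sball Q0 0 (r / 6)" unfolding h0_def by (rule scale_in[OF t])
  then have h0: "h0 \<in> W2" using Q0(3) by (auto simp: sball_def)
  define e' where "e' = e / (2 * t ^ n)"
  have e': "e' > 0" using e t0 by (simp add: e'_def)
  obtain Q \<rho> \<delta> where T: "finite Q" "Q \<subseteq> PE" "\<rho> > 0" "\<delta> > 0"
    "\<And>\<zeta> \<zeta>' h'. \<zeta> \<in> sphere 0 1 \<Longrightarrow> \<zeta>' \<in> sphere 0 1 \<Longrightarrow> norm (\<zeta> - \<zeta>') < \<delta> \<Longrightarrow> h' \<in> W2 \<Longrightarrow>
        h' \<in> sball Q h0 \<rho> \<Longrightarrow> q (Tf 0 \<zeta> h' - Tf 0 \<zeta>' h0) < e'"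
    using TL[OF h0 q e', of 0] by auto
  define r' where "r' = min (t * \<rho>) (t * (r / 6))"
  have r': "r' > 0" using t0 T(3) Q0(3) by (simp add: r'_def)
  show "\<exists>Q r. finite Q \<and> Q \<subseteq> PE \<and> r > 0 \<and> (\<forall>y\<in>sball Q y0 r. q (pn n y - pn n y0) < e)"
  proof (intro exI[of _ "Q \<union> Q0"] exI[of _ r'] conjI ballI)
    show "finite (Q \<union> Q0)" "Q \<union> Q0 \<subseteq> PE" using T Q0 by auto
    show "r' > 0" by (rule r')
    fix y assume y: "y \<in> sball (Q \<union> Q0) y0 r'"
    define h where "h = smE (of_real (1 / t)) y"
    have hd: "h - h0 = smE (of_real (1 / t)) (y - y0)" by (simp add: h_def h0_def sE.diff_right)
    have pd: "p (h - h0) = p (y - y0) / t" if "p \<in> PE" for p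
    proof -
      interpret p: snorm smE p using E.sn that .
      show ?thesis unfolding hd using t0 by (simp add: p.homog norm_divide)
    qed
    have hQ: "h \<in> sball Q h0 \<rho>"
      unfolding sball_def
    proof (intro CollectI ballI)
      fix p assume p: "p \<in> Q"
      have "p (y - y0) < t * \<rho>" using y p by (auto simp: sball_def r'_def)
      then show "p (h - h0) < \<rho>" using pd[of p] p T(2) t0 by (auto simp: divide_less_eq mult.commute)
    qed
    have hW: "h \<in> W2"
      unfolding sball_def
    proof (intro CollectI ballI)
      fix p assume p: "p \<in> Q0"
      interpret p: snorm smE p using E.sn p Q0(2) by blast
      have "p (y - y0) < t * (r / 6)" using y p by (auto simp: sball_def r'_def)
      then have a: "p (h - h0) < r / 6" using pd[of p] p Q0(2) t0 by (auto simp: divide_less_eq mult.commute)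
      have b: "p (h0 - 0) < r / 6" using h06 p by (simp add: sball_def)
      have "p (h - 0) \<le> p (h - h0) + p (h0 - 0)" by (rule p.triangle_diff)
      then show "p (h - 0) < r / 3" using a b by simp
    qed
    have "q (pn n h - pn n h0) \<le> e'"
    proof (rule pn_diff_bound[OF hW h0 q])
      fix \<zeta> :: complex assume z: "\<zeta> \<in> sphere 0 1"
      show "q (f (x + smE \<zeta> h) - f (x + smE \<zeta> h0)) \<le> e'"
        using T(5)[of \<zeta> \<zeta> h] z hW hQ T(4) by (simp add: Tf0)
    qed
    moreover have ys: "y = smE (of_real t) h" "y0 = smE (of_real t) h0"
      unfolding h_def h0_def using t0 by (simp_all add: sE.mult[symmetric])
    have "pn n y - pn n y0 = smF (of_real t ^ n) (pn n h - pn n h0)"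
      unfolding ys pn_homog by (simp add: sF.diff_right)
    then have "q (pn n y - pn n y0) = t ^ n * q (pn n h - pn n h0)"
      using t0 by (simp add: q.homog norm_power)
    ultimately have "q (pn n y - pn n y0) \<le> t ^ n * e'" using t0 by simp
    also have "\<dots> = e / 2" using t0 by (simp add: e'_def)
    finally show "q (pn n y - pn n y0) < e" using e by simp
  qed
qed

end


lemma geom_ivl: "N \<le> N' \<Longrightarrow> (\<Sum>n\<in>{N..<N'}. (1/2::real) ^ n) = 2 * (1/2) ^ N - 2 * (1/2) ^ N'"
proof (induction N' rule: dec_induct)
  case base then show ?case by simp
next
  case (step N')
  then show ?case by (simp add: sum.atLeastLessThan_Suc)
qed

context atx begin

lemma SER:
  assumes y: "y \<in> sball Q0 x (r / 6)"
  shows "limitin (seminorm_topology PF) (\<lambda>N. \<Sum>n<N. pn n (y - x)) (f y) sequentially"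
proof -
  define h where "h = y - x"
  define h2 where "h2 = smE 2 h"
  have hW: "h \<in> W2" using y Q0(3) by (auto simp: sball_def h_def)
  have h2W: "h2 \<in> W2"
    unfolding sball_def
  proof (intro CollectI ballI)
    fix p assume p: "p \<in> Q0"
    interpret p: snorm smE p using E.sn p Q0(2) by blast
    have "p (h2 - 0) = 2 * p h" by (simp add: h2_def p.homog)
    also have "\<dots> < r / 3" using y p by (auto simp: sball_def h_def mult.commute)
    finally show "p (h2 - 0) < r / 3" .
  qed
  have hh2: "h = smE (1/2) h2" by (simp add: h2_def sE.mult[symmetric])
  define P where "P = (\<lambda>N. \<Sum>n<N. pn n h)"
  have cauchy: "seminorm_Cauchy PF P"
    unfolding seminorm_Cauchy_def
  proof (intro ballI allI impI)
    fix q and e :: real assume q: "q \<in> PF" and e: "e > 0"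
    interpret q: snorm smF q using F.sn[OF q] .
    obtain M where M: "M \<ge> 0" "\<forall>\<zeta>\<in>sphere 0 1. q (f (x + smE \<zeta> h2)) \<le> M"
      using BS[OF h2W q] by blast
    have pb: "q (pn n h) \<le> M * (1/2) ^ n" for n
    proof -
      have "q (pn n h) = (1/2) ^ n * q (pn n h2)"
        unfolding hh2 pn_homog by (simp add: q.homog norm_power)
      also have "\<dots> \<le> (1/2) ^ n * M" using pn_bound[OF h2W q] M(2) by (intro mult_left_mono) auto
      finally show ?thesis by (simp add: mult.commute)
    qed
    have key: "q (P N' - P N) \<le> 2 * M * (1/2) ^ N" if "N \<le> N'" for N N'
    proof -
      have "P N' - P N = (\<Sum>n\<in>{N..<N'}. pn n h)"
        unfolding P_def using sum_diff_nat_ivl[of 0 N N' "\<lambda>n. pn n h"] that by (simp add: atLeast0LessThan)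
      then have "q (P N' - P N) \<le> (\<Sum>n\<in>{N..<N'}. q (pn n h))" using q.sum by simp
      also have "\<dots> \<le> (\<Sum>n\<in>{N..<N'}. M * (1/2) ^ n)" by (intro sum_mono pb)
      also have "\<dots> = M * (2 * (1/2) ^ N - 2 * (1/2) ^ N')" by (simp add: sum_distrib_left[symmetric] geom_ivl[OF that])
      also have "\<dots> \<le> 2 * M * (1/2) ^ N" using M(1) by (simp add: algebra_simps)
      finally show ?thesis .
    qed
    obtain N where N: "2 * M * (1/2) ^ N < e"
    proof (cases "M = 0")
      case True then show ?thesis using that[of 0] e by simp
    next
      case False
      then have "M > 0" using M(1) by simp
      obtain N where "(1/2::real) ^ N < e / (2 * M)" using real_arch_pow_inv[of "e / (2 * M)" "1/2"] e \<open>M > 0\<close> by auto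
      then show ?thesis using that[of N] \<open>M > 0\<close> by (simp add: field_simps)
    qed
    show "\<exists>N. \<forall>m\<ge>N. \<forall>n\<ge>N. q (P m - P n) < e"
    proof (intro exI[of _ N] allI impI)
      fix m n assume m: "m \<ge> N" and n: "n \<ge> N"
      have mono: "2 * M * (1/2::real) ^ k \<le> 2 * M * (1/2) ^ N" if "k \<ge> N" for k
        using M(1) that by (intro mult_left_mono power_decreasing) auto
      show "q (P m - P n) < e"
      proof (cases "n \<le> m")
        case True then show ?thesis using key[OF True] mono[OF n] N by simp
      next
        case False
        then have "q (P n - P m) \<le> 2 * M * (1/2) ^ m" using key[of m n] by simp
        then show ?thesis using q.commute[of "P m" "P n"] mono[OF m] N by simp
      qed
    qed
  qed
  then obtain s where s: "limitin (seminorm_topology PF) P s sequentially"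
    using Fcomplete unfolding seq_complete_lcs_def by blast
  have "s = f y"
  proof (rule sep)
    fix l assume l: "l \<in> \<Lambda>"
    have A: "(\<lambda>N. l (P N)) \<longlonglongrightarrow> l s" by (rule l_lim[OF s l])
    have "(\<lambda>n. qs l n h * 1 ^ n) sums l (f (x + smE 1 h))" by (rule SL[OF l hW]) simp
    then have "(\<lambda>n. qs l n h) sums l (f y)" by (simp add: h_def)
    then have B: "(\<lambda>N. l (P N)) \<longlonglongrightarrow> l (f y)"
      unfolding P_def sums_def by (simp add: l_sum[OF l] PN[OF l])
    show "l s = l (f y)" by (rule LIMSEQ_unique[OF A B])
  qed
  then show ?thesis using s by (simp add: P_def h_def)
qed

end


context atx begin

lemma POLY: "chom_poly smE smF n (pn n)"
proof -
  have "\<forall>l\<in>\<Lambda>. \<exists>B. cmultilinear smE times n B \<and> (\<forall>y. qs l n y = B (\<lambda>_. y))"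
  proof
    fix l assume l: "l \<in> \<Lambda>"
    from qs[OF l] have "chom_poly smE times n (qs l n)" by blast
    then show "\<exists>B. cmultilinear smE times n B \<and> (\<forall>y. qs l n y = B (\<lambda>_. y))"
      unfolding chom_poly_def by blast
  qed
  then obtain Bf where Bf0: "\<forall>l\<in>\<Lambda>. cmultilinear smE times n (Bf l) \<and> (\<forall>y. qs l n y = Bf l (\<lambda>_. y))"
    by (rule bchoice[elim_format]) blast
  then have Bf: "\<And>l. l \<in> \<Lambda> \<Longrightarrow> cmultilinear smE times n (Bf l) \<and> (\<forall>y. qs l n y = Bf l (\<lambda>_. y))"
    by blast
  define c where "c = card (Bij n)"
  have c: "c > 0" unfolding c_def by (rule Bij_card_pos)
  define A where "A = (\<lambda>v. smF (1 / of_nat c) (\<Sum>S\<in>Pow {..<n}. smF ((-1) ^ (n - card S)) (pn n (\<Sum>i\<in>S. v i))))"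
  have lA: "l (A v) = (1 / of_nat c) * Sym n (Bf l) v" if l: "l \<in> \<Lambda>" for l v
  proof -
    have "l (A v) = (1 / of_nat c) * (\<Sum>S\<in>Pow {..<n}. (-1) ^ (n - card S) * Bf l (\<lambda>_. \<Sum>i\<in>S. v i))"
      unfolding A_def using Bf[OF l] by (simp add: l_sm[OF l] l_sum[OF l] PN[OF l])
    also have "(\<Sum>S\<in>Pow {..<n}. (-1) ^ (n - card S) * Bf l (\<lambda>_. \<Sum>i\<in>S. v i)) = Sym n (Bf l) v"
      unfolding Sym_def by (rule polar) (use Bf[OF l] in blast)
    finally show ?thesis .
  qed
  have cml: "cmultilinear smE smF n A"
    unfolding cmultilinear_def clinear_map_def
  proof (intro conjI allI impI)
    fix v w :: "nat \<Rightarrow> 'a" assume vw: "\<forall>i<n. v i = w i"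
    show "A v = A w" unfolding A_def
    proof (rule arg_cong[where f="smF _"], rule sum.cong[OF refl])
      fix S assume "S \<in> Pow {..<n}"
      then have "(\<Sum>i\<in>S. v i) = (\<Sum>i\<in>S. w i)" using vw by (intro sum.cong) auto
      then show "smF ((-1) ^ (n - card S)) (pn n (\<Sum>i\<in>S. v i)) = smF ((-1) ^ (n - card S)) (pn n (\<Sum>i\<in>S. w i))"
        by simp
    qed
  next
    fix i v y z assume i: "i < n"
    show "A (v(i := y + z)) = A (v(i := y)) + A (v(i := z))"
    proof (rule sep)
      fix l assume l: "l \<in> \<Lambda>"
      show "l (A (v(i := y + z))) = l (A (v(i := y)) + A (v(i := z)))"
        unfolding l_add[OF l] lA[OF l] Sym_add[OF conjunct1[OF Bf[OF l]] i] by (simp add: distrib_left)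
    qed
  next
    fix i v and a :: complex and y assume i: "i < n"
    show "A (v(i := smE a y)) = smF a (A (v(i := y)))"
    proof (rule sep)
      fix l assume l: "l \<in> \<Lambda>"
      show "l (A (v(i := smE a y))) = l (smF a (A (v(i := y))))"
        unfolding l_sm[OF l] lA[OF l] Sym_smult[OF conjunct1[OF Bf[OF l]] i] by simp
    qed
  qed
  have "pn n y = A (\<lambda>_. y)" for y
  proof (rule sep)
    fix l assume l: "l \<in> \<Lambda>"
    show "l (pn n y) = l (A (\<lambda>_. y))"
      unfolding lA[OF l] Sym_const PN[OF l] using Bf[OF l] c by (simp add: c_def)
  qed
  then show ?thesis unfolding chom_poly_def using cml by blast
qed

end


theorem lemmaA3:
  fixes smE :: "complex \<Rightarrow> 'a::ab_group_add \<Rightarrow> 'a" and PE :: "('a \<Rightarrow> real) set"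
    and smF :: "complex \<Rightarrow> 'b::ab_group_add \<Rightarrow> 'b" and PF :: "('b \<Rightarrow> real) set"
    and U :: "'a set" and f :: "'a \<Rightarrow> 'b" and \<Lambda> :: "('b \<Rightarrow> complex) set"
  assumes E: "clcs smE PE"
    and F: "clcs smF PF" and Fcomplete: "seq_complete_lcs PF"
    and U: "openin (seminorm_topology PE) U"
    and \<Lambda>_lin: "\<forall>l\<in>\<Lambda>. clinear_map smF times l \<and>
                   continuous_map (seminorm_topology PF) euclidean l"
    and \<Lambda>_sep: "\<forall>x. x \<noteq> 0 \<longrightarrow> (\<exists>l\<in>\<Lambda>. l x \<noteq> 0)"
    and f_cont: "continuous_map (subtopology (seminorm_topology PE) U) (seminorm_topology PF) f"
    and weak: "\<forall>l\<in>\<Lambda>. canalytic smE PE times complex_seminorms U (l \<circ> f)"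
  shows "canalytic smE PE smF PF U f"
proof -
  interpret S: setting smE PE smF PF U f \<Lambda>
    by (rule setting.intro[OF E F Fcomplete U \<Lambda>_lin \<Lambda>_sep f_cont weak])
  show ?thesis
    unfolding canalytic_def
  proof (intro conjI ballI)
    show "continuous_map (subtopology (seminorm_topology PE) U) (seminorm_topology PF) f" by (rule f_cont)
    fix x assume x: "x \<in> U"
    obtain Q0 r where Q0: "finite Q0" "Q0 \<subseteq> PE" "r > 0" "sball Q0 x r \<subseteq> U"
      using S.E.openin_ball_exists[OF U x] by blast
    have "\<forall>l\<in>\<Lambda>. \<exists>V. \<exists>qs. openin (seminorm_topology PE) V \<and> x \<in> V \<and>
       (\<forall>n. chom_poly smE times n (qs n)) \<and> (\<forall>y\<in>V. (\<lambda>n. qs n (y - x)) sums l (f y))"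
    proof
      fix l assume l: "l \<in> \<Lambda>"
      have "canalytic smE PE times complex_seminorms U (l \<circ> f)" using weak l by blast
      then have "\<exists>V pn. openin (seminorm_topology PE) V \<and> x \<in> V \<and> V \<subseteq> U \<and>
        (\<forall>n. chom_poly smE times n (pn n) \<and>
             continuous_map (seminorm_topology PE) (seminorm_topology complex_seminorms) (pn n)) \<and>
        (\<forall>y\<in>V. limitin (seminorm_topology complex_seminorms) (\<lambda>N. \<Sum>n<N. pn n (y - x)) ((l \<circ> f) y) sequentially)"
        using x unfolding canalytic_def by blast
      then obtain V pn where V: "openin (seminorm_topology PE) V" "x \<in> V"
        "\<forall>n. chom_poly smE times n (pn n)"
        "\<forall>y\<in>V. limitin (seminorm_topology complex_seminorms) (\<lambda>N. \<Sum>n<N. pn n (y - x)) ((l \<circ> f) y) sequentially"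
        by blast
      have "\<forall>y\<in>V. (\<lambda>n. pn n (y - x)) sums l (f y)"
      proof
        fix y assume "y \<in> V"
        from limitin_complex[OF V(4)[rule_format, OF this]] show "(\<lambda>n. pn n (y - x)) sums l (f y)"
          by (simp add: sums_def)
      qed
      then show "\<exists>V. \<exists>qs. openin (seminorm_topology PE) V \<and> x \<in> V \<and>
       (\<forall>n. chom_poly smE times n (qs n)) \<and> (\<forall>y\<in>V. (\<lambda>n. qs n (y - x)) sums l (f y))"
        using V(1-3) by blast
    qed
    then obtain Vx where "\<forall>l\<in>\<Lambda>. \<exists>qs. openin (seminorm_topology PE) (Vx l) \<and> x \<in> Vx l \<and>
       (\<forall>n. chom_poly smE times n (qs n)) \<and> (\<forall>y\<in>Vx l. (\<lambda>n. qs n (y - x)) sums l (f y))"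
      by (rule bchoice[elim_format]) blast
    then obtain qs where qs: "\<forall>l\<in>\<Lambda>. openin (seminorm_topology PE) (Vx l) \<and> x \<in> Vx l \<and>
       (\<forall>n. chom_poly smE times n (qs l n)) \<and> (\<forall>y\<in>Vx l. (\<lambda>n. qs l n (y - x)) sums l (f y))"
      by (rule bchoice[elim_format]) blast
    interpret A: atx smE PE smF PF U f \<Lambda> x Q0 r Vx qs
    proof (rule atx.intro[OF S.setting_axioms], rule atx_axioms.intro)
      show "x \<in> U" by (rule x)
      show "finite Q0" "Q0 \<subseteq> PE" "r > 0" "sball Q0 x r \<subseteq> U" by (rule Q0)+
      fix l assume "l \<in> \<Lambda>"
      then show "openin (seminorm_topology PE) (Vx l) \<and> x \<in> Vx l \<and>
       (\<forall>n. chom_poly smE times n (qs l n)) \<and> (\<forall>y\<in>Vx l. (\<lambda>n. qs l n (y - x)) sums l (f y))"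
        using qs by blast
    qed
    have Vo: "openin (seminorm_topology PE) (sball Q0 x (r / 6))"
      using S.E.openin_sball Q0 by simp
    have Vx: "x \<in> sball Q0 x (r / 6)" using S.E.center_sball Q0 by simp
    have VU: "sball Q0 x (r / 6) \<subseteq> U"
      using Q0 by (force simp: sball_def)
    show "\<exists>V pn. openin (seminorm_topology PE) V \<and> x \<in> V \<and> V \<subseteq> U \<and>
        (\<forall>n. chom_poly smE smF n (pn n) \<and>
             continuous_map (seminorm_topology PE) (seminorm_topology PF) (pn n)) \<and>
        (\<forall>y\<in>V. limitin (seminorm_topology PF) (\<lambda>N. \<Sum>n<N. pn n (y - x)) (f y) sequentially)"
    proof (intro exI[of _ "sball Q0 x (r / 6)"] exI[of _ A.pn] conjI allI ballI)
      show "openin (seminorm_topology PE) (sball Q0 x (r / 6))" by (rule Vo)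
      show "x \<in> sball Q0 x (r / 6)" by (rule Vx)
      show "sball Q0 x (r / 6) \<subseteq> U" by (rule VU)
      fix n show "chom_poly smE smF n (A.pn n)" by (rule A.POLY)
      show "continuous_map (seminorm_topology PE) (seminorm_topology PF) (A.pn n)" by (rule A.CT)
    next
      fix y assume "y \<in> sball Q0 x (r / 6)"
      then show "limitin (seminorm_topology PF) (\<lambda>N. \<Sum>n<N. A.pn n (y - x)) (f y) sequentially"
        by (rule A.SER)
    qed
  qed
qed


end
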